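(* Fix $\gamma\in[0,1)$, $R_{\max}>0$ and $K\ge2$, and let $z_1<\dots<z_K$ be evenly spaced with $z_1=-R_{\max}/(1-\gamma)$ and $z_K=R_{\max}/(1-\gamma)$. Let $s_k(\mu)=\mathbb{E}_{Z\sim\mu}[h_{z_k,z_{k+1}}(Z)]$ for $k=1,\dots,K-1$. Then for every MDP with discount factor $\gamma$ whose reward distributions are all supported on $[-R_{\max},R_{\max}]$, and every policy $\pi$, the CDRL fixed point $\eta$ (the unique collection of distributions supported on $\{z_1,\dots,z_K\}$ with $\eta=\Pi_{\mathcal C}\mathcal T^\pi\eta$) satisfies $$\sup_{(x,a)\in\mathcal X\times\mathcal A}\frac{1}{K-1}\sum_{k=1}^{K-1}\big|s_k(\eta^\pi(x,a))-s_k(\eta(x,a))\big|\le\frac{\gamma}{2(1-\gamma)(K-1)}.$$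
   Context: MDP setting: finite state space $\mathcal X$, finite action space $\mathcal A$, transition kernel $p$, discount $\gamma$, reward distributions $\mathcal R(\cdot\mid x,a)$; policy $\pi:\mathcal X\to\mathscr P(\mathcal A)$; $\eta^\pi(x,a)$ is the law of the return $\sum_t\gamma^tR_t$ started from $X_0=x,A_0=a$ with $R_t\sim\mathcal R(\cdot\mid X_t,A_t)$, $X_{t+1}\sim p(\cdot\mid X_t,A_t)$, $A_{t+1}\sim\pi(\cdot\mid X_{t+1})$. Distributional Bellman operator: for a collection $\eta=(\eta(x,a))$ of distributions, $(\mathcal T^\pi\eta)(x,a)=\sum_{x',a'}p(x'\mid x,a)\pi(a'\mid x')\int\mathcal R(\mathrm dr\mid x,a)\,(f_{r,\gamma})_\#\eta(x',a')$, where $f_{r,\gamma}(z)=r+\gamma z$ and $g_\#\mu$ is the pushforward; $\eta^\pi=\mathcal T^\pi\eta^\pi$. For $a<b$, $h_{a,b}(x)=1$ for $x\le a$, $0$ for $x\ge b$, $(b-x)/(b-a)$ on $[a,b]$. The Cramér projection $\Pi_{\mathcal C}$: $\Pi_{\mathcal C}(\delta_w)=\delta_{z_1}$ if $w\le z_1$, $\delta_{z_K}$ if $w\ge z_K$, and $\frac{z_{k+1}-w}{z_{k+1}-z_k}\delta_{z_k}+\frac{w-z_k}{z_{k+1}-z_k}\delta_{z_{k+1}}$ for $z_k\le w\le z_{k+1}$, extended affinely to all distributions, and applied statewise to collections. *)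

theory Defs
  imports "HOL-Probability.Probability"
begin

definition hfun :: "real \<Rightarrow> real \<Rightarrow> real \<Rightarrow> real" where
  "hfun a b w = (if w \<le> a then 1 else if b \<le> w then 0 else (b - w) / (b - a))"

text \<open>Evenly spaced support z_1 < ... < z_K with z_1 = -Rmax/(1-gamma), z_K = Rmax/(1-gamma);
  indices k = 1..K.\<close>
definition zgrid :: "real \<Rightarrow> real \<Rightarrow> nat \<Rightarrow> nat \<Rightarrow> real" where
  "zgrid \<gamma> Rmax K k =
     - Rmax / (1 - \<gamma>) + (real k - 1) * (2 * Rmax / (1 - \<gamma>)) / (real K - 1)"

definition cramer_dirac_pmf :: "(nat \<Rightarrow> real) \<Rightarrow> nat \<Rightarrow> real \<Rightarrow> real pmf" where
  "cramer_dirac_pmf z K w =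
     (if w \<le> z 1 then return_pmf (z 1)
      else if z K \<le> w then return_pmf (z K)
      else (let k = (GREATEST k. k < K \<and> z k \<le> w) in
            map_pmf (\<lambda>b. if b then z (Suc k) else z k)
              (bernoulli_pmf ((w - z k) / (z (Suc k) - z k)))))"

text \<open>Cramer projection of a general (Borel) distribution: the affine (mixture) extension.\<close>
definition cramer_proj :: "(nat \<Rightarrow> real) \<Rightarrow> nat \<Rightarrow> real measure \<Rightarrow> real measure" where
  "cramer_proj z K \<mu> = \<mu> \<bind> (\<lambda>w. distr (measure_pmf (cramer_dirac_pmf z K w)) borel id)"

definition bellman_op ::
  "('x \<Rightarrow> 'a \<Rightarrow> 'x pmf) \<Rightarrow> ('x \<Rightarrow> 'a pmf) \<Rightarrow> ('x \<Rightarrow> 'a \<Rightarrow> real measure) \<Rightarrow> real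
   \<Rightarrow> ('x \<Rightarrow> 'a \<Rightarrow> real measure) \<Rightarrow> 'x \<Rightarrow> 'a \<Rightarrow> real measure" where
  "bellman_op p \<pi> R \<gamma> \<eta> x a =
     measure_pmf (bind_pmf (p x a) (\<lambda>x'. map_pmf (\<lambda>a'. (x', a')) (\<pi> x')))
     \<bind> (\<lambda>(x', a'). R x a \<bind> (\<lambda>r. distr (\<eta> x' a') borel (\<lambda>z. r + \<gamma> * z)))"

text \<open>At each time step t an independent sample
  (nx, act, rew) is drawn, where independently for every (x,a): nx(x,a) ~ p(.|x,a),
  rew(x,a) ~ R(.|x,a), and for every x: act(x) ~ pi(.|x).  Then
  X_{t+1} = nx_t(X_t,A_t), A_{t+1} = act_t(X_{t+1}), R_t = rew_t(X_t,A_t).\<close>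
type_synonym ('x, 'a) step = "('x \<times> 'a \<Rightarrow> 'x) \<times> ('x \<Rightarrow> 'a) \<times> ('x \<times> 'a \<Rightarrow> real)"

definition step_measure ::
  "('x \<Rightarrow> 'a \<Rightarrow> 'x pmf) \<Rightarrow> ('x \<Rightarrow> 'a pmf) \<Rightarrow> ('x \<Rightarrow> 'a \<Rightarrow> real measure) \<Rightarrow> ('x, 'a) step measure" where
  "step_measure p \<pi> R =
     (PiM UNIV (\<lambda>xa. measure_pmf (p (fst xa) (snd xa))))
     \<Otimes>\<^sub>M (PiM UNIV (\<lambda>x. measure_pmf (\<pi> x)))
     \<Otimes>\<^sub>M (PiM UNIV (\<lambda>xa. R (fst xa) (snd xa)))"

primrec traj :: "'x \<times> 'a \<Rightarrow> ('x, 'a) step stream \<Rightarrow> nat \<Rightarrow> 'x \<times> 'a" where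
  "traj s \<omega> 0 = s"
| "traj s \<omega> (Suc t) =
     (let x' = fst (\<omega> !! t) (traj s \<omega> t) in (x', fst (snd (\<omega> !! t)) x'))"

definition reward_at :: "'x \<times> 'a \<Rightarrow> ('x, 'a) step stream \<Rightarrow> nat \<Rightarrow> real" where
  "reward_at s \<omega> t = snd (snd (\<omega> !! t)) (traj s \<omega> t)"

definition disc_return :: "real \<Rightarrow> 'x \<times> 'a \<Rightarrow> ('x, 'a) step stream \<Rightarrow> real" where
  "disc_return \<gamma> s \<omega> = (\<Sum>t. \<gamma> ^ t * reward_at s \<omega> t)"

definition eta_pi ::
  "('x \<Rightarrow> 'a \<Rightarrow> 'x pmf) \<Rightarrow> ('x \<Rightarrow> 'a pmf) \<Rightarrow> ('x \<Rightarrow> 'a \<Rightarrow> real measure) \<Rightarrow> real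
   \<Rightarrow> 'x \<Rightarrow> 'a \<Rightarrow> real measure" where
  "eta_pi p \<pi> R \<gamma> x a =
     distr (stream_space (step_measure p \<pi> R)) borel (disc_return \<gamma> (x, a))"

definition s_stat :: "(nat \<Rightarrow> real) \<Rightarrow> nat \<Rightarrow> real measure \<Rightarrow> real" where
  "s_stat z k \<mu> = (\<integral>w. hfun (z k) (z (Suc k)) w \<partial>\<mu>)"

end

theory Submission
  imports Defs
begin


definition clip :: "real \<Rightarrow> real" where "clip t = max 0 (min 1 t)"

lemma clip_measurable[measurable]: "clip \<in> borel_measurable borel"
  unfolding clip_def by measurable

lemma clip_bounds: "0 \<le> clip t" "clip t \<le> 1"
  by (auto simp: clip_def)

lemma clip_mono: "s \<le> t \<Longrightarrow> clip s \<le> clip t"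
  by (auto simp: clip_def)

lemma clip_lip: "\<bar>clip s - clip t\<bar> \<le> \<bar>s - t\<bar>"
  by (auto simp: clip_def)

lemma clip_aff:
  assumes "m \<le> t" "t \<le> m + 1" and "m \<in> \<int>"
  shows "clip t = (m + 1 - t) * clip m + (t - m) * clip (m + 1)"
proof -
  from assms(3) obtain i where i: "m = of_int i" by (auto elim: Ints_cases)
  show ?thesis
  proof (cases "i \<ge> 1")
    case True then have "m \<ge> 1" using i by simp
    then show ?thesis using assms by (simp add: clip_def algebra_simps)
  next
    case False
    show ?thesis
    proof (cases "i = 0")
      case True then show ?thesis using assms i by (simp add: clip_def)
    next
      case False
      with \<open>\<not> i \<ge> 1\<close> have "i \<le> -1" by simp
      then have "m \<le> -1" using i by simp
      then show ?thesis using assms by (simp add: clip_def)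
    qed
  qed
qed

lemma sum_clip: "(\<Sum>k=1..n. clip (real k - y)) = max 0 (min (real n) (real n - y))"
proof (induction n)
  case 0 then show ?case by simp
next
  case (Suc n)
  have "(\<Sum>k=1..Suc n. clip (real k - y)) = (\<Sum>k=1..n. clip (real k - y)) + clip (real (Suc n) - y)"
    by simp
  also have "\<dots> = max 0 (min (real n) (real n - y)) + clip (real n + 1 - y)"
    using Suc by (simp add: add.commute)
  also have "\<dots> = max 0 (min (real (Suc n)) (real (Suc n) - y))"
    by (simp add: clip_def)
  finally show ?case .
qed

lemma sum_clip_lip:
  assumes "a \<le> b"
  shows "(\<Sum>k=1..n. \<bar>clip (real k - a) - clip (real k - b)\<bar>) \<le> b - a"
proof -
  have "(\<Sum>k=1..n. \<bar>clip (real k - a) - clip (real k - b)\<bar>) = (\<Sum>k=1..n. clip (real k - a) - clip (real k - b))"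
    using assms clip_mono[of "real _ - b" "real _ - a"] by (intro sum.cong) auto
  also have "\<dots> = (\<Sum>k=1..n. clip (real k - a)) - (\<Sum>k=1..n. clip (real k - b))"
    by (simp add: sum_subtractf)
  also have "\<dots> \<le> b - a" unfolding sum_clip using assms by simp
  finally show ?thesis .
qed

lemma sum_clip_lip':
  "(\<Sum>k=1..n. \<bar>clip (real k - a) - clip (real k - b)\<bar>) \<le> \<bar>b - a\<bar>"
proof (cases "a \<le> b")
  case True then show ?thesis using sum_clip_lip[OF True, of n] by simp
next
  case False then have "b \<le> a" by simp
  from sum_clip_lip[OF this, of n] show ?thesis by (simp add: abs_minus_commute)
qed

lemma lip_combo:
  fixes e :: "nat \<Rightarrow> real"
  assumes e: "\<And>k. \<bar>e k\<bar> \<le> 1" and g: "0 \<le> g"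
  shows "\<bar>(\<Sum>k=1..n. e k * clip (real k - (g * u + b))) - (\<Sum>k=1..n. e k * clip (real k - (g * v + b)))\<bar>
      \<le> g * \<bar>u - v\<bar>"
proof -
  have "\<bar>(\<Sum>k=1..n. e k * clip (real k - (g * u + b))) - (\<Sum>k=1..n. e k * clip (real k - (g * v + b)))\<bar>
      = \<bar>\<Sum>k=1..n. e k * (clip (real k - (g * u + b)) - clip (real k - (g * v + b)))\<bar>"
    by (simp add: sum_subtractf[symmetric] algebra_simps)
  also have "\<dots> \<le> (\<Sum>k=1..n. \<bar>e k * (clip (real k - (g * u + b)) - clip (real k - (g * v + b)))\<bar>)"
    by (rule sum_abs)
  also have "\<dots> \<le> (\<Sum>k=1..n. \<bar>clip (real k - (g * u + b)) - clip (real k - (g * v + b))\<bar>)"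
    by (intro sum_mono) (auto simp: abs_mult intro!: mult_left_le_one_le e)
  also have "\<dots> \<le> \<bar>(g * v + b) - (g * u + b)\<bar>" by (rule sum_clip_lip')
  also have "\<dots> = \<bar>g * (u - v)\<bar>" by (simp add: algebra_simps abs_minus_commute)
  also have "\<dots> = g * \<bar>u - v\<bar>" using g by (simp add: abs_mult)
  finally show ?thesis .
qed

lemma sum_zero_low:
  fixes d :: "nat \<Rightarrow> real"
  assumes "real j \<le> y"
  shows "(\<Sum>k=1..j. d k * clip (real k - y)) = 0"
  using assms by (intro sum.neutral) (auto simp: clip_def)

lemma interp_formula:
  fixes g :: "nat \<Rightarrow> real"
  assumes "j < n" "real j \<le> y" "y \<le> real j + 1"
  shows "(\<Sum>k=1..n. (g (k-1) - g k) * clip (real k - y)) = (real j + 1 - y) * (g j - g (Suc j)) + g (Suc j) - g n"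
  using assms(1)
proof (induction n)
  case 0 then show ?case by simp
next
  case (Suc n)
  show ?case
  proof (cases "j = n")
    case True
    have "(\<Sum>k=1..Suc n. (g (k-1) - g k) * clip (real k - y)) = (\<Sum>k=1..j. (g (k-1) - g k) * clip (real k - y)) + (g j - g (Suc j)) * clip (real j + 1 - y)"
      using True by (simp add: add.commute)
    also have "\<dots> = (g j - g (Suc j)) * (real j + 1 - y)"
      using sum_zero_low[OF assms(2)] assms by (simp add: clip_def)
    finally show ?thesis using True by (simp add: algebra_simps)
  next
    case False
    with Suc.prems have jn: "j < n" by simp
    have "(\<Sum>k=1..Suc n. (g (k-1) - g k) * clip (real k - y)) = (\<Sum>k=1..n. (g (k-1) - g k) * clip (real k - y)) + (g n - g (Suc n)) * clip (real n + 1 - y)"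
      by (simp add: add.commute)
    also have "clip (real n + 1 - y) = 1" using jn assms by (simp add: clip_def)
    finally show ?thesis using Suc.IH[OF jn] by (simp add: algebra_simps)
  qed
qed

lemma exists_cell:
  assumes "1 \<le> n" "0 \<le> y" "y \<le> real n"
  obtains j where "j < n" "real j \<le> y" "y \<le> real j + 1"
proof (cases "y \<ge> real (n - 1)")
  case True then show ?thesis using assms by (intro that[of "n - 1"]) auto
next
  case False
  let ?j = "nat \<lfloor>y\<rfloor>"
  have "real ?j \<le> y" using assms by linarith
  moreover have "y \<le> real ?j + 1" using assms by linarith
  moreover have "real ?j < real (n - 1)" using False \<open>real ?j \<le> y\<close> by linarith
  ultimately show ?thesis using assms by (intro that[of ?j]) auto
qed

lemma mult_le_abs_bound:
  fixes d y g :: real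
  assumes "\<bar>d\<bar> \<le> g" shows "d * y \<le> g * \<bar>y\<bar>"
proof -
  have "d * y \<le> \<bar>d\<bar> * \<bar>y\<bar>" by (metis abs_ge_self abs_mult)
  also have "\<dots> \<le> g * \<bar>y\<bar>" by (rule mult_right_mono[OF assms abs_ge_zero])
  finally show ?thesis .
qed

lemma (in prob_space) integrable_bounded_real:
  fixes f :: "'a \<Rightarrow> real"
  shows "f \<in> borel_measurable M \<Longrightarrow> (\<And>x. \<bar>f x\<bar> \<le> B) \<Longrightarrow> integrable M f"
  by (intro integrable_const_bound[where B=B]) auto

lemma partB:
  fixes \<mu> \<nu> :: "real measure" and Y :: "real \<Rightarrow> real" and e :: "nat \<Rightarrow> real"
  assumes pm: "prob_space \<mu>" and pn: "prob_space \<nu>"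
    and sm: "sets \<mu> = sets borel" and sn: "sets \<nu> = sets borel"
    and Ym[measurable]: "Y \<in> borel_measurable borel"
    and aem: "AE w in \<mu>. 0 \<le> Y w \<and> Y w \<le> real n"
    and aen: "AE w in \<nu>. \<exists>m\<le>n. Y w = real m"
    and e: "\<And>k. \<bar>e k\<bar> \<le> 1" and g: "0 \<le> g" and n: "1 \<le> n"
  shows "(\<integral>w. (\<Sum>k=1..n. e k * clip (real k - (g * Y w + b))) \<partial>\<mu>)
       - (\<integral>w. (\<Sum>k=1..n. e k * clip (real k - (g * Y w + b))) \<partial>\<nu>)
     \<le> g / 2 + g * (\<Sum>k=1..n. \<bar>(\<integral>w. clip (real k - Y w) \<partial>\<mu>) - (\<integral>w. clip (real k - Y w) \<partial>\<nu>)\<bar>)"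
proof -
  interpret M: prob_space \<mu> by fact
  interpret N: prob_space \<nu> by fact
  define f where "f y = (\<Sum>k=1..n. e k * clip (real k - (g * y + b)))" for y
  define G where "G k = f (real k)" for k
  define fh where "fh y = G n + (\<Sum>k=1..n. (G (k-1) - G k) * clip (real k - y))" for y
  have flip: "\<bar>f u - f v\<bar> \<le> g * \<bar>u - v\<bar>" for u v
    unfolding f_def by (rule lip_combo[OF e g])
  have interp: "fh y = (real j + 1 - y) * G j + (y - real j) * G (Suc j)"
    if "j < n" "real j \<le> y" "y \<le> real j + 1" for j y
    unfolding fh_def interp_formula[OF that] by (simp add: algebra_simps)
  have grid: "fh (real m) = f (real m)" if "m \<le> n" for m
  proof (cases "m < n")
    case True then show ?thesis using interp[of m "real m"] by (simp add: G_def)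
  next
    case False then have "m = n" using that by simp
    then show ?thesis using interp[of "n - 1" "real m"] n by (simp add: G_def of_nat_diff)
  qed
  have near: "f y - fh y \<le> g / 2" if yy: "0 \<le> y" "y \<le> real n" for y
  proof -
    obtain j where j: "j < n" "real j \<le> y" "y \<le> real j + 1" using exists_cell[OF n yy] by blast
    define t where "t = y - real j"
    have t: "0 \<le> t" "t \<le> 1" using j by (auto simp: t_def)
    have "f y - fh y = (1 - t) * (f y - G j) + t * (f y - G (Suc j))"
      using interp[OF j] by (simp add: t_def algebra_simps)
    also have "\<dots> \<le> (1 - t) * (g * t) + t * (g * (1 - t))"
    proof (intro add_mono mult_left_mono)
      show "f y - G j \<le> g * t" using flip[of y "real j"] j by (simp add: G_def t_def)
      show "f y - G (Suc j) \<le> g * (1 - t)" using flip[of y "real (Suc j)"] j by (simp add: G_def t_def algebra_simps)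
    qed (use t in auto)
    also have "\<dots> = g * (2 * t * (1 - t))" by (simp add: algebra_simps)
    also have "\<dots> \<le> g * (1/2)"
    proof (intro mult_left_mono g)
      have "0 \<le> (2 * t - 1)^2" by simp
      then show "2 * t * (1 - t) \<le> 1/2" by (simp add: power2_eq_square algebra_simps)
    qed
    finally show ?thesis by simp
  qed
  have dk: "\<bar>G (k-1) - G k\<bar> \<le> g" if "1 \<le> k" for k
    using flip[of "real (k-1)" "real k"] that by (simp add: G_def of_nat_diff)
  have [measurable]: "f \<in> borel_measurable borel" unfolding f_def by measurable
  have [measurable]: "fh \<in> borel_measurable borel" unfolding fh_def by measurable
  note sm[measurable_cong] sn[measurable_cong]
  have intcm: "integrable \<mu> (\<lambda>w. clip (real k - Y w))" for k
    by (rule M.integrable_bounded_real[where B=1]) (auto simp: clip_def)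
  have intcn: "integrable \<nu> (\<lambda>w. clip (real k - Y w))" for k
    by (rule N.integrable_bounded_real[where B=1]) (auto simp: clip_def)
  have intfm: "integrable \<mu> (\<lambda>w. f (Y w))" unfolding f_def
    by (rule Bochner_Integration.integrable_sum, rule integrable_mult_right, rule M.integrable_bounded_real[where B=1])
       (auto simp: clip_def)
  have intfn: "integrable \<nu> (\<lambda>w. f (Y w))" unfolding f_def
    by (rule Bochner_Integration.integrable_sum, rule integrable_mult_right, rule N.integrable_bounded_real[where B=1])
       (auto simp: clip_def)
  have intfhm: "integrable \<mu> (\<lambda>w. fh (Y w))" unfolding fh_def
    by (rule Bochner_Integration.integrable_add, simp, rule Bochner_Integration.integrable_sum, rule integrable_mult_right, rule intcm)
  have Ifh: "(\<integral>w. fh (Y w) \<partial>M) = G n + (\<Sum>k=1..n. (G (k-1) - G k) * (\<integral>w. clip (real k - Y w) \<partial>M))"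
    if "prob_space M" "\<And>k. integrable M (\<lambda>w. clip (real k - Y w))" for M
  proof -
    interpret prob_space M by fact
    show ?thesis unfolding fh_def
      apply (subst Bochner_Integration.integral_add)
        apply (simp, rule Bochner_Integration.integrable_sum, rule integrable_mult_right, rule that)
      apply (subst Bochner_Integration.integral_sum)
       apply (rule integrable_mult_right, rule that)
      apply (simp add: prob_space)
      done
  qed
  have In: "(\<integral>w. f (Y w) \<partial>\<nu>) = (\<integral>w. fh (Y w) \<partial>\<nu>)"
    by (rule integral_cong_AE) (use aen grid in auto)
  have Im: "(\<integral>w. f (Y w) \<partial>\<mu>) - (\<integral>w. fh (Y w) \<partial>\<mu>) \<le> g / 2"
  proof -
    have "(\<integral>w. f (Y w) \<partial>\<mu>) - (\<integral>w. fh (Y w) \<partial>\<mu>) = (\<integral>w. f (Y w) - fh (Y w) \<partial>\<mu>)"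
      by (rule Bochner_Integration.integral_diff[symmetric, OF intfm intfhm])
    also have "\<dots> \<le> (\<integral>w. g / 2 \<partial>\<mu>)"
      by (rule integral_mono_AE) (use intfm intfhm aem near in auto)
    also have "\<dots> = g / 2" by (simp add: M.prob_space)
    finally show ?thesis .
  qed
  have "(\<integral>w. f (Y w) \<partial>\<mu>) - (\<integral>w. f (Y w) \<partial>\<nu>)
      = ((\<integral>w. f (Y w) \<partial>\<mu>) - (\<integral>w. fh (Y w) \<partial>\<mu>))
        + (\<Sum>k=1..n. (G (k-1) - G k) * ((\<integral>w. clip (real k - Y w) \<partial>\<mu>) - (\<integral>w. clip (real k - Y w) \<partial>\<nu>)))"
  proof -
    define d where "d k = G (k-1) - G k" for k
    define a where "a k = (\<integral>w. clip (real k - Y w) \<partial>\<mu>)" for k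
    define c where "c k = (\<integral>w. clip (real k - Y w) \<partial>\<nu>)" for k
    have "(\<Sum>k=1..n. d k * (a k - c k)) = (\<Sum>k=1..n. d k * a k) - (\<Sum>k=1..n. d k * c k)"
      by (simp add: right_diff_distrib sum_subtractf)
    moreover have "(\<integral>w. fh (Y w) \<partial>\<mu>) = G n + (\<Sum>k=1..n. d k * a k)"
      unfolding d_def a_def by (rule Ifh[OF pm intcm])
    moreover have "(\<integral>w. fh (Y w) \<partial>\<nu>) = G n + (\<Sum>k=1..n. d k * c k)"
      unfolding d_def c_def by (rule Ifh[OF pn intcn])
    ultimately show ?thesis
      unfolding In d_def[symmetric] a_def[symmetric] c_def[symmetric]
      by linarith
  qed
  also have "\<dots> \<le> g / 2 + (\<Sum>k=1..n. g * \<bar>(\<integral>w. clip (real k - Y w) \<partial>\<mu>) - (\<integral>w. clip (real k - Y w) \<partial>\<nu>)\<bar>)"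
  proof (intro add_mono Im sum_mono)
    fix k assume "k \<in> {1..n}"
    then have "\<bar>G (k-1) - G k\<bar> \<le> g" by (intro dk) auto
    then show "(G (k-1) - G k) * ((\<integral>w. clip (real k - Y w) \<partial>\<mu>) - (\<integral>w. clip (real k - Y w) \<partial>\<nu>))
       \<le> g * \<bar>(\<integral>w. clip (real k - Y w) \<partial>\<mu>) - (\<integral>w. clip (real k - Y w) \<partial>\<nu>)\<bar>"
      by (rule mult_le_abs_bound)
  qed
  finally show ?thesis unfolding f_def by (simp add: sum_distrib_left)
qed



lemma measurable_shift_kernel:
  fixes E Rm :: "real measure" and g :: real
  assumes E: "prob_space E" "sets E = sets borel" and Rs: "sets Rm = sets borel"
  shows "(\<lambda>r. distr E borel (\<lambda>z. r + g * z)) \<in> measurable Rm (subprob_algebra borel)"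
proof (rule measurable_distr2[where M=E])
  show "(\<lambda>(r, z). r + g * z) \<in> Rm \<Otimes>\<^sub>M E \<rightarrow>\<^sub>M borel"
  proof -
    have "(\<lambda>(r, z). r + g * z) \<in> borel \<Otimes>\<^sub>M borel \<rightarrow>\<^sub>M (borel :: real measure)" by measurable
    then show ?thesis using E Rs by (simp add: measurable_cong_sets[OF sets_pair_measure_cong[OF Rs E(2)] refl])
  qed
  show "(\<lambda>x. E) \<in> Rm \<rightarrow>\<^sub>M subprob_algebra E"
    using E by (intro measurable_const) (auto simp: space_subprob_algebra prob_space_imp_subprob_space)
qed

lemma integral_inner_kernel:
  fixes \<phi> :: "real \<Rightarrow> real" and E Rm :: "real measure" and g :: real
  assumes E: "prob_space E" "sets E = sets borel" and Rm: "prob_space Rm" "sets Rm = sets borel"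
    and \<phi>[measurable]: "\<phi> \<in> borel_measurable borel" and B: "\<And>w. \<bar>\<phi> w\<bar> \<le> B"
  shows "(\<integral>w. \<phi> w \<partial>(Rm \<bind> (\<lambda>r. distr E borel (\<lambda>z. r + g * z))))
       = (\<integral>r. (\<integral>w. \<phi> (r + g * w) \<partial>E) \<partial>Rm)"
proof -
  have K: "(\<lambda>r. distr E borel (\<lambda>z. r + g * z)) \<in> measurable Rm (subprob_algebra borel)"
    by (rule measurable_shift_kernel[OF E Rm(2)])
  have "(\<integral>w. \<phi> w \<partial>(Rm \<bind> (\<lambda>r. distr E borel (\<lambda>z. r + g * z))))
      = (\<integral>r. (\<integral>w. \<phi> w \<partial>distr E borel (\<lambda>z. r + g * z)) \<partial>Rm)"
  proof (rule integral_bind[where B=B and B'=1])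
    show "finite_measure Rm" using Rm(1) unfolding prob_space_def by simp
    show "AE x in Rm. emeasure (distr E borel (\<lambda>z. x + g * z)) (space (distr E borel (\<lambda>z. x + g * z))) \<le> ennreal 1"
      using E by (auto intro!: AE_I2 simp: emeasure_distr measurable_cong_sets[OF E(2) refl] prob_space.emeasure_space_1)
  qed (use K B in auto)
  also have "\<dots> = (\<integral>r. (\<integral>w. \<phi> (r + g * w) \<partial>E) \<partial>Rm)"
    using E by (intro Bochner_Integration.integral_cong refl integral_distr)
       (auto simp: measurable_cong_sets[OF E(2) refl])
  finally show ?thesis .
qed

lemma pmf_bellman_pair:
  "pmf (bind_pmf P (\<lambda>x'. map_pmf (\<lambda>a'. (x', a')) (Q x'))) (y, b) = pmf P y * pmf (Q y) b"
proof -
  have "pmf (bind_pmf P (\<lambda>x'. map_pmf (\<lambda>a'. (x', a')) (Q x'))) (y, b)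
     = (\<integral>x'. pmf (map_pmf (\<lambda>a'. (x', a')) (Q x')) (y, b) \<partial>measure_pmf P)"
    by (rule pmf_bind)
  also have "\<dots> = (\<integral>x'. indicator {y} x' * pmf (Q y) b \<partial>measure_pmf P)"
  proof (intro Bochner_Integration.integral_cong refl)
    fix x' show "pmf (map_pmf (\<lambda>a'. (x', a')) (Q x')) (y, b) = indicator {y} x' * pmf (Q y) b"
    proof (cases "x' = y")
      case True
      then show ?thesis using pmf_map_inj'[of "\<lambda>a'. (y, a')" "Q y" b] by (simp add: inj_def)
    next
      case False
      then show ?thesis by (auto simp: pmf_eq_0_set_pmf)
    qed
  qed
  also have "\<dots> = pmf P y * pmf (Q y) b"
    by (simp add: measure_pmf.emeasure_eq_measure pmf.rep_eq)
  finally show ?thesis .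
qed

lemma bellman_integral:
  fixes p :: "'x::finite \<Rightarrow> 'a::finite \<Rightarrow> 'x pmf" and \<pi> :: "'x \<Rightarrow> 'a pmf"
    and R E :: "'x \<Rightarrow> 'a \<Rightarrow> real measure" and \<phi> :: "real \<Rightarrow> real" and g :: real
  assumes R: "\<And>x a. prob_space (R x a)" "\<And>x a. sets (R x a) = sets borel"
    and E: "\<And>x a. prob_space (E x a)" "\<And>x a. sets (E x a) = sets borel"
    and \<phi>[measurable]: "\<phi> \<in> borel_measurable borel" and B: "\<And>w. \<bar>\<phi> w\<bar> \<le> B"
  shows "(\<integral>w. \<phi> w \<partial>bellman_op p \<pi> R g E x a)
    = (\<Sum>x'\<in>UNIV. \<Sum>a'\<in>UNIV. pmf (p x a) x' * pmf (\<pi> x') a' * (\<integral>r. (\<integral>w. \<phi> (r + g * w) \<partial>E x' a') \<partial>R x a))"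
proof -
  define Q where "Q = bind_pmf (p x a) (\<lambda>x'. map_pmf (\<lambda>a'. (x', a')) (\<pi> x'))"
  define N where "N = (\<lambda>(x', a'). R x a \<bind> (\<lambda>r. distr (E x' a') borel (\<lambda>z. r + g * z)))"
  have Nsp: "N y \<in> space (subprob_algebra borel)" for y
  proof -
    obtain x' a' where y: "y = (x', a')" by (cases y)
    have K: "(\<lambda>r. distr (E x' a') borel (\<lambda>z. r + g * z)) \<in> measurable (R x a) (subprob_algebra borel)"
      by (rule measurable_shift_kernel[OF E(1) E(2) R(2)])
    have ne: "space (R x a) \<noteq> {}" using R(1) prob_space.not_empty by blast
    have "subprob_space (N y)" unfolding N_def y
      by (simp, rule subprob_space_bind[OF _ K]) (use R(1) prob_space_imp_subprob_space in blast)
    moreover have "sets (N y) = sets borel" unfolding N_def y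
      using ne K by (simp add: sets_kernel[OF K])
    ultimately show ?thesis by (simp add: space_subprob_algebra)
  qed
  have Nm: "N \<in> measurable (measure_pmf Q) (subprob_algebra borel)"
    using Nsp by simp
  have "(\<integral>w. \<phi> w \<partial>bellman_op p \<pi> R g E x a) = (\<integral>w. \<phi> w \<partial>(measure_pmf Q \<bind> N))"
    unfolding bellman_op_def Q_def N_def ..
  also have "\<dots> = (\<integral>y. (\<integral>w. \<phi> w \<partial>N y) \<partial>measure_pmf Q)"
  proof (rule integral_bind[where B=B and B'=1])
    show "AE y in measure_pmf Q. emeasure (N y) (space (N y)) \<le> ennreal 1"
      using Nsp by (auto simp: space_subprob_algebra intro!: AE_I2 subprob_space.subprob_emeasure_le_1)
    show "finite_measure (measure_pmf Q)"
      using measure_pmf.prob_space_axioms[of Q] unfolding prob_space_def by simp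
  qed (use Nm B in auto)
  also have "\<dots> = (\<Sum>y\<in>UNIV. (\<integral>w. \<phi> w \<partial>N y) * pmf Q y)"
    by (rule integral_measure_pmf_real) auto
  also have "\<dots> = (\<Sum>x'\<in>UNIV. \<Sum>a'\<in>UNIV. (\<integral>w. \<phi> w \<partial>N (x', a')) * pmf Q (x', a'))"
    unfolding UNIV_Times_UNIV[symmetric] sum.cartesian_product by (simp add: case_prod_beta)
  also have "\<dots> = (\<Sum>x'\<in>UNIV. \<Sum>a'\<in>UNIV. pmf (p x a) x' * pmf (\<pi> x') a' * (\<integral>r. (\<integral>w. \<phi> (r + g * w) \<partial>E x' a') \<partial>R x a))"
    unfolding N_def Q_def pmf_bellman_pair
    apply (intro sum.cong refl)
    apply (simp only: prod.case integral_inner_kernel[OF E(1) E(2) R(1) R(2) \<phi> B])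
    apply (simp add: mult_ac)
    done
  finally show ?thesis .
qed

lemma bellman_prob:
  fixes p :: "'x::finite \<Rightarrow> 'a::finite \<Rightarrow> 'x pmf" and \<pi> :: "'x \<Rightarrow> 'a pmf"
    and R E :: "'x \<Rightarrow> 'a \<Rightarrow> real measure" and g :: real
  assumes R: "\<And>x a. prob_space (R x a)" "\<And>x a. sets (R x a) = sets borel"
    and E: "\<And>x a. prob_space (E x a)" "\<And>x a. sets (E x a) = sets borel"
  shows "prob_space (bellman_op p \<pi> R g E x a)" "sets (bellman_op p \<pi> R g E x a) = sets borel"
proof -
  define Q where "Q = bind_pmf (p x a) (\<lambda>x'. map_pmf (\<lambda>a'. (x', a')) (\<pi> x'))"
  define N where "N = (\<lambda>(x', a'). R x a \<bind> (\<lambda>r. distr (E x' a') borel (\<lambda>z. r + g * z)))"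
  have Nsp: "N y \<in> space (subprob_algebra borel) \<and> prob_space (N y)" for y
  proof -
    obtain x' a' where y: "y = (x', a')" by (cases y)
    have K: "(\<lambda>r. distr (E x' a') borel (\<lambda>z. r + g * z)) \<in> measurable (R x a) (subprob_algebra borel)"
      by (rule measurable_shift_kernel[OF E(1) E(2) R(2)])
    have ne: "space (R x a) \<noteq> {}" using R(1) prob_space.not_empty by blast
    have P: "prob_space (N y)" unfolding N_def y
    proof (simp, rule prob_space.prob_space_bind[OF R(1) _ K])
      show "AE r in R x a. prob_space (distr (E x' a') borel (\<lambda>z. r + g * z))"
        using E by (intro AE_I2 prob_space.prob_space_distr) (auto simp: measurable_cong_sets[OF E(2) refl])
    qed
    moreover have "sets (N y) = sets borel" unfolding N_def y
      using ne K by (simp add: sets_kernel[OF K])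
    ultimately show ?thesis by (simp add: space_subprob_algebra prob_space_imp_subprob_space)
  qed
  have Nm: "N \<in> measurable (measure_pmf Q) (subprob_algebra borel)"
    using Nsp by simp
  have eq: "bellman_op p \<pi> R g E x a = measure_pmf Q \<bind> N"
    unfolding bellman_op_def Q_def N_def ..
  show "prob_space (bellman_op p \<pi> R g E x a)" unfolding eq
    by (rule measure_pmf.prob_space_bind[OF _ Nm]) (use Nsp in auto)
  show "sets (bellman_op p \<pi> R g E x a) = sets borel" unfolding eq
    using Nsp by (subst sets_bind) (auto simp: space_subprob_algebra)
qed

lemma meas_param_int:
  fixes f :: "real \<Rightarrow> real" and E Rm :: "real measure" and g :: real
  assumes E: "prob_space E" "sets E = sets borel" and Rs: "sets Rm = sets borel"
    and f[measurable]: "f \<in> borel_measurable borel"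
  shows "(\<lambda>r. \<integral>w. f (r + g * w) \<partial>E) \<in> borel_measurable Rm"
proof -
  interpret prob_space E by fact
  have "(\<lambda>(r, w). f (r + g * w)) \<in> borel_measurable (borel \<Otimes>\<^sub>M borel)" by measurable
  then have "(\<lambda>(r, w). f (r + g * w)) \<in> borel_measurable (Rm \<Otimes>\<^sub>M E)"
    by (simp add: measurable_cong_sets[OF sets_pair_measure_cong[OF Rs E(2)] refl])
  then show ?thesis by (rule borel_measurable_lebesgue_integral)
qed

lemma abs_integral_bound:
  fixes f :: "'b \<Rightarrow> real"
  assumes "prob_space M" "f \<in> borel_measurable M" "\<And>x. \<bar>f x\<bar> \<le> B"
  shows "\<bar>\<integral>x. f x \<partial>M\<bar> \<le> B"
proof -
  interpret prob_space M by fact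
  have int: "integrable M f" by (rule integrable_bounded_real[OF assms(2,3)])
  have "B \<ge> 0" using assms(3)[of undefined] by simp
  have "(\<integral>x. f x \<partial>M) \<le> B" using assms(3) by (intro integral_le_const int AE_I2) (auto simp: abs_le_iff)
  moreover have "- B \<le> (\<integral>x. f x \<partial>M)"
  proof (intro integral_ge_const int AE_I2)
    fix x show "- B \<le> f x" using assms(3)[of x] by simp
  qed
  ultimately show ?thesis by simp
qed

lemma prob_AE_of_emeasure:
  assumes "prob_space M" "A \<in> sets M" "emeasure M A = 1"
  shows "AE x in M. x \<in> A"
proof -
  interpret prob_space M by fact
  show ?thesis using assms by (intro AE_prob_1) (simp add: emeasure_eq_measure)
qed



locale grid =
  fixes \<gamma> Rmax :: real and K :: nat
  assumes g0: "0 \<le> \<gamma>" and g1: "\<gamma> < 1" and R0: "0 < Rmax" and K2: "2 \<le> K"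
begin

definition "z1 = - Rmax / (1 - \<gamma>)"
definition "D = 2 * Rmax / (1 - \<gamma>) / (real K - 1)"
definition "Y w = (w - z1) / D"
abbreviation "z \<equiv> zgrid \<gamma> Rmax K"

lemma Dpos: "0 < D"
  using g1 R0 K2 unfolding D_def by (auto intro!: divide_pos_pos)

lemma z_eq: "z k = z1 + (real k - 1) * D"
  unfolding zgrid_def z1_def D_def by simp

lemma zK: "z K = - z1"
proof -
  have "real K - 1 \<noteq> 0" "1 - \<gamma> \<noteq> 0" using K2 g1 by auto
  then have "(real K - 1) * D = 2 * Rmax / (1 - \<gamma>)" unfolding D_def by simp
  then show ?thesis unfolding z_eq z1_def by (simp add: field_simps)
qed

lemma z1_neg: "z1 < 0"
  using g1 R0 unfolding z1_def by simp

lemma Y_z: "Y (z k) = real k - 1"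
  using Dpos unfolding Y_def z_eq by simp

lemma Y_le_iff: "u \<le> v \<longleftrightarrow> Y u \<le> Y v"
  using Dpos unfolding Y_def by (simp add: divide_le_cancel)

lemma Y_less_iff: "u < v \<longleftrightarrow> Y u < Y v"
  using Dpos unfolding Y_def by (simp add: divide_less_cancel)

lemma Y_measurable[measurable]: "Y \<in> borel_measurable borel"
  unfolding Y_def[abs_def] by measurable

lemma Y_aff: "Y (r + \<gamma> * w) = \<gamma> * Y w + (r + \<gamma> * z1 - z1) / D"
  using Dpos unfolding Y_def by (simp add: field_simps)

lemma hfun_clip: "hfun (z k) (z (Suc k)) w = clip (real k - Y w)"
proof -
  have a: "w \<le> z k \<longleftrightarrow> Y w \<le> real k - 1" using Y_le_iff[of w "z k"] Y_z by simp
  have b: "z (Suc k) \<le> w \<longleftrightarrow> real k \<le> Y w" using Y_le_iff[of "z (Suc k)" w] Y_z by simp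
  have c: "(z (Suc k) - w) / (z (Suc k) - z k) = real k - Y w"
    using Dpos unfolding z_eq Y_def by (simp add: field_simps)
  show ?thesis unfolding hfun_def a b c by (auto simp: clip_def)
qed

lemma s_stat_clip: "s_stat z k \<mu> = (\<integral>w. clip (real k - Y w) \<partial>\<mu>)"
  unfolding s_stat_def hfun_clip ..

lemma cell:
  assumes "z 1 < u" "u < z K"
  defines "k \<equiv> GREATEST k. k < K \<and> z k \<le> u"
  shows "1 \<le> k" "k < K" "z k \<le> u" "u < z (Suc k)"
proof -
  have P1: "1 < K \<and> z 1 \<le> u" using assms K2 by auto
  have bnd: "\<And>y. y < K \<and> z y \<le> u \<Longrightarrow> y \<le> K" by simp
  have Pk: "k < K \<and> z k \<le> u" unfolding k_def by (rule GreatestI_nat[where P="\<lambda>k. k < K \<and> z k \<le> u", OF P1 bnd])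
  then show "k < K" "z k \<le> u" by auto
  show "1 \<le> k" unfolding k_def by (rule Greatest_le_nat[where P="\<lambda>k. k < K \<and> z k \<le> u", OF P1 bnd])
  show "u < z (Suc k)"
  proof (rule ccontr)
    assume "\<not> u < z (Suc k)"
    then have le: "z (Suc k) \<le> u" by simp
    show False
    proof (cases "Suc k < K")
      case True
      then have "Suc k \<le> k" unfolding k_def by (intro Greatest_le_nat[where P="\<lambda>k. k < K \<and> z k \<le> u", OF _ bnd]) (use le k_def in auto)
      then show False by simp
    next
      case False
      then have "Suc k = K" using Pk by simp
      then show False using le assms by simp
    qed
  qed
qed

definition "Nk u = distr (measure_pmf (cramer_dirac_pmf z K u)) borel id"

lemma z1_eq: "z 1 = z1" unfolding z_eq by simp

lemma cramer_interior:
  assumes "z 1 < u" "u < z K"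
  defines "k \<equiv> GREATEST k. k < K \<and> z k \<le> u"
  defines "q \<equiv> (u - z k) / (z (Suc k) - z k)"
  shows "cramer_dirac_pmf z K u = map_pmf (\<lambda>b. if b then z (Suc k) else z k) (bernoulli_pmf q)"
    and "q = Y u - (real k - 1)" and "0 \<le> q" "q \<le> 1"
    and "real k - 1 \<le> Y u" "Y u \<le> real k" "1 \<le> k" "k < K"
proof -
  note c = cell[OF assms(1,2), folded k_def]
  show "cramer_dirac_pmf z K u = map_pmf (\<lambda>b. if b then z (Suc k) else z k) (bernoulli_pmf q)"
    using assms(1,2) unfolding cramer_dirac_pmf_def k_def q_def by (simp add: Let_def)
  show qe: "q = Y u - (real k - 1)" unfolding q_def Y_def z_eq using Dpos by (simp add: field_simps)
  show "real k - 1 \<le> Y u" using c(3) Y_le_iff[of "z k" u] Y_z by simp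
  moreover show "Y u \<le> real k" using c(4) Y_less_iff[of u "z (Suc k)"] Y_z by simp
  ultimately show "0 \<le> q" "q \<le> 1" unfolding qe by auto
  show "1 \<le> k" "k < K" using c by auto
qed

lemma Nk_integral_clip:
  assumes "z1 \<le> u" "u \<le> - z1"
  shows "(\<integral>w. clip (real j - Y w) \<partial>Nk u) = clip (real j - Y u)"
proof -
  have "(\<integral>w. clip (real j - Y w) \<partial>Nk u) = (\<integral>w. clip (real j - Y w) \<partial>measure_pmf (cramer_dirac_pmf z K u))"
    unfolding Nk_def by (subst integral_distr) auto
  also have "\<dots> = clip (real j - Y u)"
  proof (cases "u \<le> z 1")
    case True
    then have "u = z 1" using assms z1_eq by simp
    then show ?thesis unfolding cramer_dirac_pmf_def by (simp add: return_pmf.rep_eq integral_return)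
  next
    case c1: False
    show ?thesis
    proof (cases "z K \<le> u")
      case True
      then have "u = z K" using assms zK by simp
      then show ?thesis using c1 unfolding cramer_dirac_pmf_def by (simp add: return_pmf.rep_eq integral_return)
    next
      case False
      define k where "k \<equiv> GREATEST k. k < K \<and> z k \<le> u"
      define q where "q \<equiv> (u - z k) / (z (Suc k) - z k)"
      have ci: "z 1 < u" "u < z K" using c1 False by auto
      note I = cramer_interior[OF ci, folded k_def, folded q_def]
      have "(\<integral>w. clip (real j - Y w) \<partial>measure_pmf (cramer_dirac_pmf z K u))
          = clip (real j - real k) * q + clip (real j - (real k - 1)) * (1 - q)"
        unfolding I(1) using I(3,4) by (simp add: Y_z)
      also have "\<dots> = clip (real j - Y u)"
      proof -
        have "real j - real k \<in> \<int>" by (metis Ints_diff Ints_of_nat)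
        from clip_aff[OF _ _ this, of "real j - Y u"] I(5,6)
        have "clip (real j - Y u) = (real j - real k + 1 - (real j - Y u)) * clip (real j - real k)
            + (real j - Y u - (real j - real k)) * clip (real j - real k + 1)" by simp
        then show ?thesis unfolding I(2) by (simp add: algebra_simps)
      qed
      finally show ?thesis .
    qed
  qed
  finally show ?thesis .
qed

definition "T j u = max 0 (1 - \<bar>max 0 (min (real K - 1) (Y u)) - (real j - 1)\<bar>)"

lemma T_measurable[measurable]: "T j \<in> borel_measurable borel"
  unfolding T_def[abs_def] by measurable

lemma Nk_emeasure:
  assumes A: "A \<in> sets borel"
  shows "emeasure (Nk u) A = (\<Sum>j\<in>{1..K}. ennreal (T j u) * indicator A (z j))"
proof -
  have "emeasure (Nk u) A = emeasure (measure_pmf (cramer_dirac_pmf z K u)) A"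
    unfolding Nk_def using A by (subst emeasure_distr) auto
  also have "\<dots> = (\<Sum>j\<in>{1..K}. ennreal (T j u) * indicator A (z j))"
  proof (cases "u \<le> z 1")
    case True
    then have Yu: "Y u \<le> 0" using Y_le_iff[of u "z 1"] Y_z by simp
    have "(\<Sum>j\<in>{1..K}. ennreal (T j u) * indicator A (z j)) = ennreal (T 1 u) * indicator A (z 1) + (\<Sum>j\<in>{Suc 1..K}. ennreal (T j u) * indicator A (z j))"
      using K2 by (subst sum.atLeast_Suc_atMost) auto
    also have "(\<Sum>j\<in>{Suc 1..K}. ennreal (T j u) * indicator A (z j)) = 0"
      using Yu by (intro sum.neutral) (auto simp: T_def)
    also have "T 1 u = 1" using Yu by (simp add: T_def)
    finally show ?thesis using True unfolding cramer_dirac_pmf_def by simp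
  next
    case c1: False
    show ?thesis
    proof (cases "z K \<le> u")
      case True
      then have Yu: "real K - 1 \<le> Y u" using Y_le_iff[of "z K" u] Y_z by simp
      obtain K' where K': "K = Suc K'" using K2 by (cases K) auto
      have "(\<Sum>j\<in>{1..K}. ennreal (T j u) * indicator A (z j)) = (\<Sum>j\<in>{1..K'}. ennreal (T j u) * indicator A (z j)) + ennreal (T K u) * indicator A (z K)"
        unfolding K' by (subst sum.cl_ivl_Suc) auto
      also have "(\<Sum>j\<in>{1..K'}. ennreal (T j u) * indicator A (z j)) = 0"
      proof (intro sum.neutral ballI)
        fix j assume "j \<in> {1..K'}"
        then have "real j \<le> real K - 1" using K' by auto
        then have "T j u = 0" using Yu by (auto simp: T_def)
        then show "ennreal (T j u) * indicator A (z j) = 0" by simp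
      qed
      also have "T K u = 1" using Yu K2 by (simp add: T_def)
      finally show ?thesis using True c1 unfolding cramer_dirac_pmf_def by simp
    next
      case False
      define k where "k \<equiv> GREATEST k. k < K \<and> z k \<le> u"
      define q where "q \<equiv> (u - z k) / (z (Suc k) - z k)"
      have ci: "z 1 < u" "u < z K" using c1 False by auto
      note I = cramer_interior[OF ci, folded k_def, folded q_def]
      have "emeasure (measure_pmf (cramer_dirac_pmf z K u)) A
          = (\<integral>\<^sup>+w. indicator A w \<partial>measure_pmf (cramer_dirac_pmf z K u))"
        by (simp add: nn_integral_indicator)
      also have "\<dots> = indicator A (z (Suc k)) * ennreal q + indicator A (z k) * ennreal (1 - q)"
        unfolding I(1) using I(3,4) by simp
      also have "\<dots> = (\<Sum>j\<in>{k, Suc k}. ennreal (T j u) * indicator A (z j))"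
      proof -
        have "T k u = 1 - q" using I(2,5,6,7,8) by (simp add: T_def)
        moreover have "T (Suc k) u = q" using I(2,5,6,7,8) by (simp add: T_def)
        ultimately show ?thesis by (simp add: mult.commute add.commute del: sum_mult_indicator)
      qed
      also have "\<dots> = (\<Sum>j\<in>{1..K}. ennreal (T j u) * indicator A (z j))"
      proof (rule sum.mono_neutral_left)
        show "{k, Suc k} \<subseteq> {1..K}" using I(7,8) by auto
        show "\<forall>j\<in>{1..K} - {k, Suc k}. ennreal (T j u) * indicator A (z j) = 0"
        proof
          fix j assume "j \<in> {1..K} - {k, Suc k}"
          then have "j < k \<or> j > Suc k" by auto
          then have "real j + 1 \<le> real k \<or> real k + 2 \<le> real j" by linarith
          moreover have "1 \<le> real k" "real k + 1 \<le> real K" using I(7,8) by linarith+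
          ultimately have "T j u = 0" using I(5,6) unfolding T_def by (auto simp: max_def min_def)
          then show "ennreal (T j u) * indicator A (z j) = 0" by simp
        qed
      qed simp
      finally show ?thesis .
    qed
  qed
  finally show ?thesis .
qed

lemma Nk_measurable: "Nk \<in> borel \<rightarrow>\<^sub>M subprob_algebra borel"
proof (rule measurable_subprob_algebra)
  fix u
  show "subprob_space (Nk u)" unfolding Nk_def
    by (intro prob_space_imp_subprob_space measure_pmf.prob_space_distr) auto
  show "sets (Nk u) = sets borel" unfolding Nk_def by simp
next
  fix A :: "real set" assume A: "A \<in> sets borel"
  show "(\<lambda>u. emeasure (Nk u) A) \<in> borel_measurable borel"
    unfolding Nk_emeasure[OF A] by measurable
qed

lemma phi_bound:
  fixes e :: "nat \<Rightarrow> real"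
  assumes e: "\<And>k. \<bar>e k\<bar> \<le> 1"
  shows "\<bar>\<Sum>k=1..n. e k * clip (real k - y)\<bar> \<le> real n"
proof -
  have "\<bar>\<Sum>k=1..n. e k * clip (real k - y)\<bar> \<le> (\<Sum>k=1..n. \<bar>e k * clip (real k - y)\<bar>)" by (rule sum_abs)
  also have "\<dots> \<le> (\<Sum>k=1..n. 1)"
    by (intro sum_mono) (auto simp: abs_mult intro!: mult_le_one e clip_bounds abs_ge_zero
        simp del: abs_le_iff, simp add: clip_def)
  finally show ?thesis by simp
qed

lemma Nk_integral_phi:
  fixes e :: "nat \<Rightarrow> real"
  assumes "z1 \<le> u" "u \<le> - z1"
  shows "(\<integral>w. (\<Sum>k=1..n. e k * clip (real k - Y w)) \<partial>Nk u) = (\<Sum>k=1..n. e k * clip (real k - Y u))"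
proof -
  have P: "prob_space (Nk u)" unfolding Nk_def by (intro measure_pmf.prob_space_distr) auto
  have S: "sets (Nk u) = sets borel" unfolding Nk_def by simp
  note S[measurable_cong]
  have int: "integrable (Nk u) (\<lambda>w. clip (real k - Y w))" for k
    by (rule prob_space.integrable_bounded_real[OF P, where B=1]) (auto simp: clip_def)
  show ?thesis
    apply (subst Bochner_Integration.integral_sum)
     apply (rule integrable_mult_right, rule int)
    apply (simp add: Nk_integral_clip[OF assms])
    done
qed

lemma eta_side:
  fixes p :: "'x::finite \<Rightarrow> 'a::finite \<Rightarrow> 'x pmf" and \<pi> :: "'x \<Rightarrow> 'a pmf"
    and R \<eta> :: "'x \<Rightarrow> 'a \<Rightarrow> real measure" and e :: "nat \<Rightarrow> real"
  assumes R: "\<And>x a. prob_space (R x a)" "\<And>x a. sets (R x a) = sets borel"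
    and Rs: "\<And>x a. emeasure (R x a) {- Rmax..Rmax} = 1"
    and E: "\<And>x a. prob_space (\<eta> x a)" "\<And>x a. sets (\<eta> x a) = sets borel"
    and Es: "\<And>x a. emeasure (\<eta> x a) (z ` {1..K}) = 1"
    and fxp: "\<And>x a. \<eta> x a = cramer_proj z K (bellman_op p \<pi> R \<gamma> \<eta> x a)"
    and e: "\<And>k. \<bar>e k\<bar> \<le> 1"
  shows "(\<integral>w. (\<Sum>k=1..n. e k * clip (real k - Y w)) \<partial>\<eta> x a)
    = (\<Sum>x'\<in>UNIV. \<Sum>a'\<in>UNIV. pmf (p x a) x' * pmf (\<pi> x') a' *
         (\<integral>r. (\<integral>w. (\<Sum>k=1..n. e k * clip (real k - Y (r + \<gamma> * w))) \<partial>\<eta> x' a') \<partial>R x a))"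
proof -
  define \<phi> where "\<phi> w = (\<Sum>k=1..n. e k * clip (real k - Y w))" for w
  have \<phi>m[measurable]: "\<phi> \<in> borel_measurable borel" unfolding \<phi>_def by measurable
  have \<phi>b: "\<bar>\<phi> w\<bar> \<le> real n" for w unfolding \<phi>_def by (rule phi_bound[OF e])
  define \<psi> where "\<psi> u = (\<integral>w. \<phi> w \<partial>Nk u)" for u
  have \<psi>m[measurable]: "\<psi> \<in> borel_measurable borel"
    unfolding \<psi>_def[abs_def] by (rule measurable_compose[OF Nk_measurable integral_measurable_subprob_algebra]) simp
  have \<psi>b: "\<bar>\<psi> u\<bar> \<le> real n" for u
    unfolding \<psi>_def
    by (rule abs_integral_bound[OF _ _ \<phi>b]) (auto simp: Nk_def intro!: measure_pmf.prob_space_distr)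
  have \<psi>\<phi>: "\<psi> u = \<phi> u" if "z1 \<le> u" "u \<le> - z1" for u
    unfolding \<psi>_def \<phi>_def by (rule Nk_integral_phi[OF that])
  note BP = bellman_prob[OF R E, where p=p and \<pi>=\<pi> and g=\<gamma> and x=x and a=a]
  have "(\<integral>w. \<phi> w \<partial>\<eta> x a) = (\<integral>w. \<phi> w \<partial>(bellman_op p \<pi> R \<gamma> \<eta> x a \<bind> Nk))"
    by (subst fxp) (simp add: cramer_proj_def Nk_def[abs_def])
  also have "\<dots> = (\<integral>u. \<psi> u \<partial>bellman_op p \<pi> R \<gamma> \<eta> x a)"
    unfolding \<psi>_def
  proof (rule integral_bind[where B="real n" and B'=1])
    show "Nk \<in> bellman_op p \<pi> R \<gamma> \<eta> x a \<rightarrow>\<^sub>M subprob_algebra borel"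
      using Nk_measurable by (simp add: measurable_cong_sets[OF BP(2) refl])
    show "finite_measure (bellman_op p \<pi> R \<gamma> \<eta> x a)" using BP(1) unfolding prob_space_def by simp
    show "AE x in bellman_op p \<pi> R \<gamma> \<eta> x a. emeasure (Nk x) (space (Nk x)) \<le> ennreal 1"
      by (intro AE_I2) (auto simp: Nk_def emeasure_distr measure_pmf.emeasure_space_1)
  qed (use \<phi>b in auto)
  also have "\<dots> = (\<Sum>x'\<in>UNIV. \<Sum>a'\<in>UNIV. pmf (p x a) x' * pmf (\<pi> x') a' * (\<integral>r. (\<integral>w. \<psi> (r + \<gamma> * w) \<partial>\<eta> x' a') \<partial>R x a))"
    by (rule bellman_integral[OF R E \<psi>m \<psi>b])
  also have "\<dots> = (\<Sum>x'\<in>UNIV. \<Sum>a'\<in>UNIV. pmf (p x a) x' * pmf (\<pi> x') a' * (\<integral>r. (\<integral>w. \<phi> (r + \<gamma> * w) \<partial>\<eta> x' a') \<partial>R x a))"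
  proof (intro sum.cong refl arg_cong2[where f="(*)"])
    fix x' a'
    have aeR: "AE r in R x a. r \<in> {- Rmax..Rmax}"
      by (rule prob_AE_of_emeasure[OF R(1)]) (auto simp: R(2) Rs)
    have fin: "z ` {1..K} \<in> sets (\<eta> x' a')" unfolding E(2)
      by (intro borel_closed finite_imp_closed) auto
    have aeE: "AE w in \<eta> x' a'. w \<in> z ` {1..K}"
      by (rule prob_AE_of_emeasure[OF E(1) fin Es])
    have rng: "z1 \<le> r + \<gamma> * w \<and> r + \<gamma> * w \<le> - z1" if rr: "r \<in> {- Rmax..Rmax}" "w \<in> z ` {1..K}" for r w
    proof -
      obtain j where j: "j \<in> {1..K}" "w = z j" using rr(2) by auto
      have "z1 \<le> w" "w \<le> - z1"
        using j Dpos unfolding z_eq zK[symmetric] by (auto intro!: mult_right_mono)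
      moreover have "(1 - \<gamma>) * z1 = - Rmax" unfolding z1_def using g1 by simp
      moreover have "\<gamma> * z1 \<le> \<gamma> * w" "\<gamma> * w \<le> \<gamma> * (- z1)"
        using mult_left_mono[OF calculation(1) g0] mult_left_mono[OF calculation(2) g0] by auto
      ultimately show ?thesis using rr(1) by (auto simp: algebra_simps)
    qed
    show "(\<integral>r. (\<integral>w. \<psi> (r + \<gamma> * w) \<partial>\<eta> x' a') \<partial>R x a) = (\<integral>r. (\<integral>w. \<phi> (r + \<gamma> * w) \<partial>\<eta> x' a') \<partial>R x a)"
    proof (rule integral_cong_AE)
      show "(\<lambda>r. \<integral>w. \<psi> (r + \<gamma> * w) \<partial>\<eta> x' a') \<in> borel_measurable (R x a)"
        by (rule meas_param_int[OF E(1) E(2) R(2) \<psi>m])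
      show "(\<lambda>r. \<integral>w. \<phi> (r + \<gamma> * w) \<partial>\<eta> x' a') \<in> borel_measurable (R x a)"
        by (rule meas_param_int[OF E(1) E(2) R(2) \<phi>m])
      show "AE r in R x a. (\<integral>w. \<psi> (r + \<gamma> * w) \<partial>\<eta> x' a') = (\<integral>w. \<phi> (r + \<gamma> * w) \<partial>\<eta> x' a')"
        using aeR
      proof eventually_elim
        case (elim r)
        show ?case
        proof (rule integral_cong_AE)
          show "(\<lambda>w. \<psi> (r + \<gamma> * w)) \<in> borel_measurable (\<eta> x' a')"
            by (simp add: measurable_cong_sets[OF E(2) refl])
          show "(\<lambda>w. \<phi> (r + \<gamma> * w)) \<in> borel_measurable (\<eta> x' a')"
            by (simp add: measurable_cong_sets[OF E(2) refl])
          show "AE w in \<eta> x' a'. \<psi> (r + \<gamma> * w) = \<phi> (r + \<gamma> * w)"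
            using aeE by eventually_elim (use rng[OF elim] \<psi>\<phi> in auto)
        qed
      qed
    qed
  qed
  finally show ?thesis unfolding \<phi>_def .
qed

end



lemma (in prob_space) integral_stream_space:
  fixes f :: "_ stream \<Rightarrow> real"
  assumes f[measurable]: "f \<in> borel_measurable (stream_space M)" and B: "\<And>x. \<bar>f x\<bar> \<le> B"
  shows "(\<integral>X. f X \<partial>stream_space M) = (\<integral>x. (\<integral>X. f (x ## X) \<partial>stream_space M) \<partial>M)"
proof -
  interpret S: sequence_space M ..
  interpret P: pair_sigma_finite M "\<Pi>\<^sub>M i::nat\<in>UNIV. M" ..
  interpret PP: prob_space "M \<Otimes>\<^sub>M (\<Pi>\<^sub>M i::nat\<in>UNIV. M)"
    by (intro prob_space_pair prob_space_axioms S.prob_space_axioms)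
  have "(\<integral>X. f X \<partial>stream_space M) = (\<integral>X. f (to_stream X) \<partial>S.S)"
    by (subst stream_space_eq_distr) (simp add: integral_distr)
  also have "\<dots> = (\<integral>X. f (to_stream ((\<lambda>(s, \<omega>). case_nat s \<omega>) X)) \<partial>(M \<Otimes>\<^sub>M S.S))"
    by (subst S.PiM_iter[symmetric]) (simp add: integral_distr)
  also have "\<dots> = (\<integral>x. \<integral>X. f (to_stream ((\<lambda>(s, \<omega>). case_nat s \<omega>) (x, X))) \<partial>S.S \<partial>M)"
  proof (rule P.integral_fst'[symmetric])
    show "integrable (M \<Otimes>\<^sub>M S.S) (\<lambda>X. f (to_stream ((\<lambda>(s, \<omega>). case_nat s \<omega>) X)))"
      by (rule PP.integrable_bounded_real[where B=B]) (auto simp: B)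
  qed
  also have "\<dots> = (\<integral>x. \<integral>X. f (x ## to_stream X) \<partial>S.S \<partial>M)"
    by (auto intro!: Bochner_Integration.integral_cong simp: to_stream_nat_case)
  also have "\<dots> = (\<integral>x. \<integral>X. f (x ## X) \<partial>stream_space M \<partial>M)"
    by (subst stream_space_eq_distr)
       (simp add: integral_distr cong: Bochner_Integration.integral_cong)
  finally show ?thesis .
qed

lemma traj_shift: "traj s (st ## \<omega>) (Suc t) = traj (traj s (st ## \<omega>) 1) \<omega> t"
  by (induction t) (simp_all add: Let_def)

lemma reward_shift: "reward_at s (st ## \<omega>) (Suc t) = reward_at (traj s (st ## \<omega>) 1) \<omega> t"
  unfolding reward_at_def traj_shift by simp

locale mdp =
  fixes p :: "'x::finite \<Rightarrow> 'a::finite \<Rightarrow> 'x pmf" and \<pi> :: "'x \<Rightarrow> 'a pmf"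
    and R :: "'x \<Rightarrow> 'a \<Rightarrow> real measure" and Rmax :: real
  assumes Rp: "\<And>x a. prob_space (R x a)" and Rsets: "\<And>x a. sets (R x a) = sets borel"
    and Rsupp: "\<And>x a. emeasure (R x a) {- Rmax..Rmax} = 1"
begin

abbreviation "PA \<equiv> PiM UNIV (\<lambda>xa. measure_pmf (p (fst xa) (snd xa)))"
abbreviation "PB \<equiv> PiM UNIV (\<lambda>x. measure_pmf (\<pi> x))"
abbreviation "PC \<equiv> PiM UNIV (\<lambda>xa. R (fst xa) (snd xa))"
abbreviation "M \<equiv> step_measure p \<pi> R"
abbreviation "S \<equiv> stream_space M"

lemma M_eq: "M = PA \<Otimes>\<^sub>M (PB \<Otimes>\<^sub>M PC)"
  unfolding step_measure_def ..

lemma PA_prob: "prob_space PA" by (intro prob_space_PiM) (simp add: measure_pmf.prob_space_axioms)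
lemma PB_prob: "prob_space PB" by (intro prob_space_PiM) (simp add: measure_pmf.prob_space_axioms)
lemma PC_prob: "prob_space PC" by (intro prob_space_PiM) (simp add: Rp)
lemma M_prob: "prob_space M"
  unfolding M_eq by (intro prob_space_pair PA_prob PB_prob PC_prob)

sublocale Mp: prob_space M by (rule M_prob)

lemma S_prob: "prob_space S" by (rule Mp.prob_space_stream_space)

lemma meas_nx: "(\<lambda>\<omega>. fst (\<omega> !! t) i) \<in> S \<rightarrow>\<^sub>M count_space UNIV"
proof -
  have "(\<lambda>f. f i) \<in> PA \<rightarrow>\<^sub>M measure_pmf (p (fst i) (snd i))"
    by (rule measurable_component_singleton) simp
  then have c: "(\<lambda>f. f i) \<in> PA \<rightarrow>\<^sub>M count_space UNIV" by simp
  have "(\<lambda>\<omega>. fst (\<omega> !! t)) \<in> S \<rightarrow>\<^sub>M PA"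
    unfolding M_eq by (rule measurable_compose[OF measurable_snth measurable_fst])
  from measurable_compose[OF this c] show ?thesis by simp
qed

lemma meas_act: "(\<lambda>\<omega>. fst (snd (\<omega> !! t)) i) \<in> S \<rightarrow>\<^sub>M count_space UNIV"
proof -
  have "(\<lambda>f. f i) \<in> PB \<rightarrow>\<^sub>M measure_pmf (\<pi> i)"
    by (rule measurable_component_singleton) simp
  then have c: "(\<lambda>f. f i) \<in> PB \<rightarrow>\<^sub>M count_space UNIV" by simp
  have "(\<lambda>\<omega>. fst (snd (\<omega> !! t))) \<in> S \<rightarrow>\<^sub>M PB"
    unfolding M_eq by (rule measurable_compose[OF measurable_compose[OF measurable_snth measurable_snd] measurable_fst])
  from measurable_compose[OF this c] show ?thesis by simp
qed

lemma meas_rew: "(\<lambda>\<omega>. snd (snd (\<omega> !! t)) i) \<in> borel_measurable S"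
proof -
  have "(\<lambda>f. f i) \<in> PC \<rightarrow>\<^sub>M R (fst i) (snd i)"
    by (rule measurable_component_singleton) simp
  then have c: "(\<lambda>f. f i) \<in> borel_measurable PC" by (simp add: measurable_cong_sets[OF refl Rsets])
  have "(\<lambda>\<omega>. snd (snd (\<omega> !! t))) \<in> S \<rightarrow>\<^sub>M PC"
    unfolding M_eq by (rule measurable_compose[OF measurable_compose[OF measurable_snth measurable_snd] measurable_snd])
  from measurable_compose[OF this c] show ?thesis by simp
qed

lemma meas_traj: "(\<lambda>\<omega>. traj s \<omega> t) \<in> S \<rightarrow>\<^sub>M count_space UNIV"
proof (induction t)
  case 0 then show ?case by simp
next
  case (Suc t)
  have x': "(\<lambda>\<omega>. fst (\<omega> !! t) (traj s \<omega> t)) \<in> S \<rightarrow>\<^sub>M count_space UNIV"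
    by (rule measurable_compose_countable'[OF meas_nx Suc]) simp
  have "(\<lambda>\<omega>. (\<lambda>i \<omega>. (i, fst (snd (\<omega> !! t)) i)) (fst (\<omega> !! t) (traj s \<omega> t)) \<omega>) \<in> S \<rightarrow>\<^sub>M count_space UNIV"
  proof (rule measurable_compose_countable'[OF _ x'])
    fix i :: 'x
    have "(\<lambda>a. (i, a)) \<in> count_space UNIV \<rightarrow>\<^sub>M count_space (UNIV :: ('x \<times> 'a) set)" by simp
    from measurable_compose[OF meas_act this] show "(\<lambda>\<omega>. (i, fst (snd (\<omega> !! t)) i)) \<in> S \<rightarrow>\<^sub>M count_space UNIV" .
  qed simp
  then show ?case by (simp add: Let_def)
qed

lemma meas_reward: "(\<lambda>\<omega>. reward_at s \<omega> t) \<in> borel_measurable S"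
  unfolding reward_at_def
  by (rule measurable_compose_countable'[OF meas_rew meas_traj]) simp

lemma meas_disc: "disc_return g s \<in> borel_measurable S"
proof -
  have "(\<lambda>\<omega>. \<Sum>t. g ^ t * reward_at s \<omega> t) \<in> borel_measurable S"
    using meas_reward by (intro borel_measurable_suminf borel_measurable_times measurable_const) auto
  then show ?thesis unfolding disc_return_def[abs_def] .
qed

definition "Bnd st \<longleftrightarrow> (\<forall>xa. \<bar>snd (snd st) xa\<bar> \<le> Rmax)"

lemma Bnd_pred: "Measurable.pred M Bnd"
proof -
  have "(\<lambda>st. snd (snd st) xa) \<in> borel_measurable M" for xa
  proof -
    have "(\<lambda>f. f xa) \<in> PC \<rightarrow>\<^sub>M R (fst xa) (snd xa)"
      by (rule measurable_component_singleton) simp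
    then have c: "(\<lambda>f. f xa) \<in> borel_measurable PC" by (simp add: measurable_cong_sets[OF refl Rsets])
    show ?thesis unfolding M_eq by (rule measurable_compose[OF measurable_compose[OF measurable_snd measurable_snd] c])
  qed
  then show ?thesis unfolding Bnd_def by measurable
qed

lemma AE_Bnd: "AE st in M. Bnd st"
proof -
  have aeR: "AE r in R x a. r \<in> {- Rmax..Rmax}" for x a
    by (rule prob_AE_of_emeasure[OF Rp]) (auto simp: Rsets Rsupp)
  have aeC: "AE c in PC. \<forall>xa\<in>UNIV. \<bar>c xa\<bar> \<le> Rmax"
  proof (rule eventually_ball_finite)
    show "\<forall>xa\<in>UNIV. AE c in PC. \<bar>c xa\<bar> \<le> Rmax"
    proof
      fix xa :: "'x \<times> 'a"
      have "AE c in PC. c xa \<in> {- Rmax..Rmax}"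
        by (rule AE_PiM_component[where M="\<lambda>xa. R (fst xa) (snd xa)", OF _ _ aeR[of "fst xa" "snd xa"]]) (auto simp: Rp)
      then show "AE c in PC. \<bar>c xa\<bar> \<le> Rmax" by eventually_elim auto
    qed
  qed simp
  interpret BC: pair_sigma_finite PB PC
    using PB_prob PC_prob by (intro pair_sigma_finite.intro) (auto simp: prob_space_imp_sigma_finite)
  interpret ABC: pair_sigma_finite PA "PB \<Otimes>\<^sub>M PC"
    using PA_prob PB_prob PC_prob
    by (intro pair_sigma_finite.intro) (auto simp: prob_space_imp_sigma_finite prob_space_pair)
  have "AE st in M. Bnd st"
    unfolding M_eq
  proof (rule ABC.AE_pair_measure)
    show "{x \<in> space (PA \<Otimes>\<^sub>M (PB \<Otimes>\<^sub>M PC)). Bnd x} \<in> sets (PA \<Otimes>\<^sub>M (PB \<Otimes>\<^sub>M PC))"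
      using Bnd_pred unfolding M_eq by measurable
    show "AE x in PA. AE y in PB \<Otimes>\<^sub>M PC. Bnd (x, y)"
    proof (rule AE_I2)
      fix x
      show "AE y in PB \<Otimes>\<^sub>M PC. Bnd (x, y)"
      proof (rule BC.AE_pair_measure)
        show "{y \<in> space (PB \<Otimes>\<^sub>M PC). Bnd (x, y)} \<in> sets (PB \<Otimes>\<^sub>M PC)"
          unfolding Bnd_def
        proof -
          have "{y \<in> space (PB \<Otimes>\<^sub>M PC). \<forall>xa. \<bar>snd (snd (x, y)) xa\<bar> \<le> Rmax}
              = space PB \<times> {c \<in> space PC. \<forall>xa. \<bar>c xa\<bar> \<le> Rmax}"
            by (auto simp: space_pair_measure)
          moreover have "{c \<in> space PC. \<forall>xa. \<bar>c xa\<bar> \<le> Rmax} \<in> sets PC"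
          proof -
            have "(\<lambda>f. f xa) \<in> borel_measurable PC" for xa
            proof -
              have "(\<lambda>f. f xa) \<in> PC \<rightarrow>\<^sub>M R (fst xa) (snd xa)"
                by (rule measurable_component_singleton) simp
              then show ?thesis by (simp add: measurable_cong_sets[OF refl Rsets])
            qed
            then show ?thesis by measurable
          qed
          ultimately show "{y \<in> space (PB \<Otimes>\<^sub>M PC). \<forall>xa. \<bar>snd (snd (x, y)) xa\<bar> \<le> Rmax} \<in> sets (PB \<Otimes>\<^sub>M PC)"
            by simp
        qed
        show "AE b in PB. AE c in PC. Bnd (x, b, c)"
          by (rule AE_I2) (use aeC in \<open>auto simp: Bnd_def\<close>)
      qed
    qed
  qed
  then show ?thesis .
qed

lemma reward_bnd:
  assumes "stream_all Bnd \<omega>" shows "\<bar>reward_at s \<omega> t\<bar> \<le> Rmax"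
  using assms unfolding stream_all_def Bnd_def reward_at_def by blast

lemma disc_term_bnd:
  assumes "stream_all Bnd \<omega>" "0 \<le> g"
  shows "\<bar>g ^ t * reward_at s \<omega> t\<bar> \<le> Rmax * g ^ t"
proof -
  have "\<bar>g ^ t * reward_at s \<omega> t\<bar> = g ^ t * \<bar>reward_at s \<omega> t\<bar>" using assms(2) by (simp add: abs_mult)
  also have "\<dots> \<le> g ^ t * Rmax" by (rule mult_left_mono[OF reward_bnd[OF assms(1)]]) (use assms(2) in simp)
  finally show ?thesis by (simp add: mult.commute)
qed

lemma disc_summable:
  assumes "stream_all Bnd \<omega>" "0 \<le> g" "g < 1"
  shows "summable (\<lambda>t. g ^ t * reward_at s \<omega> t)"
proof (rule summable_comparison_test)
  show "summable (\<lambda>t. Rmax * g ^ t)" using assms by (intro summable_mult summable_geometric) auto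
  show "\<exists>N. \<forall>n\<ge>N. norm (g ^ n * reward_at s \<omega> n) \<le> Rmax * g ^ n"
    using disc_term_bnd[OF assms(1,2)] by auto
qed

lemma disc_bound:
  assumes "stream_all Bnd \<omega>" "0 \<le> g" "g < 1"
  shows "\<bar>disc_return g s \<omega>\<bar> \<le> Rmax / (1 - g)"
proof -
  have sg: "summable (\<lambda>t. Rmax * g ^ t)" using assms by (intro summable_mult summable_geometric) auto
  have sm: "summable (\<lambda>t. - (Rmax * g ^ t))" using summable_minus[OF sg] .
  have sf: "summable (\<lambda>t. g ^ t * reward_at s \<omega> t)" by (rule disc_summable[OF assms])
  have b: "\<bar>g ^ t * reward_at s \<omega> t\<bar> \<le> Rmax * g ^ t" for t
    by (rule disc_term_bnd[OF assms(1,2)])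
  have eq: "(\<Sum>t. Rmax * g ^ t) = Rmax / (1 - g)"
    using assms by (simp add: suminf_mult suminf_geometric divide_simps)
  have "disc_return g s \<omega> \<le> (\<Sum>t. Rmax * g ^ t)"
    unfolding disc_return_def by (rule suminf_le[OF _ sf sg]) (use b in \<open>auto simp: abs_le_iff\<close>)
  moreover have "(\<Sum>t. - (Rmax * g ^ t)) \<le> disc_return g s \<omega>"
    unfolding disc_return_def
  proof (rule suminf_le[OF _ sm sf])
    fix n show "- (Rmax * g ^ n) \<le> g ^ n * reward_at s \<omega> n" using b[of n] by linarith
  qed
  moreover have "(\<Sum>t. - (Rmax * g ^ t)) = - (\<Sum>t. Rmax * g ^ t)" by (rule suminf_minus[OF sg])
  ultimately show ?thesis unfolding eq by auto
qed

lemma disc_shift: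
  assumes "stream_all Bnd (st ## \<omega>)" "0 \<le> g" "g < 1"
  shows "disc_return g s (st ## \<omega>) = snd (snd st) s + g * disc_return g (traj s (st ## \<omega>) 1) \<omega>"
proof -
  have B\<omega>: "stream_all Bnd \<omega>" using assms(1) unfolding stream_all_def
    by (metis snth.simps(2) stream.sel(2))
  have sf: "summable (\<lambda>t. g ^ t * reward_at s (st ## \<omega>) t)" by (rule disc_summable[OF assms])
  have sh: "summable (\<lambda>t. g ^ t * reward_at (traj s (st ## \<omega>) 1) \<omega> t)" by (rule disc_summable[OF B\<omega> assms(2,3)])
  have "disc_return g s (st ## \<omega>) = (\<Sum>t. g ^ Suc t * reward_at s (st ## \<omega>) (Suc t)) + g ^ 0 * reward_at s (st ## \<omega>) 0"
    unfolding disc_return_def suminf_split_head[OF sf] by simp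
  also have "(\<Sum>t. g ^ Suc t * reward_at s (st ## \<omega>) (Suc t)) = (\<Sum>t. g * (g ^ t * reward_at (traj s (st ## \<omega>) 1) \<omega> t))"
    unfolding reward_shift by (simp add: mult_ac)
  also have "\<dots> = g * disc_return g (traj s (st ## \<omega>) 1) \<omega>"
    unfolding disc_return_def by (rule suminf_mult[OF sh])
  finally show ?thesis by (simp add: reward_at_def)
qed

lemma comp_PC: "(\<lambda>c. c xa) \<in> borel_measurable PC"
proof -
  have "(\<lambda>f. f xa) \<in> PC \<rightarrow>\<^sub>M R (fst xa) (snd xa)"
    by (rule measurable_component_singleton) simp
  then show ?thesis by (simp add: measurable_cong_sets[OF refl Rsets])
qed

lemma comp_PB: "(\<lambda>b. b x) \<in> PB \<rightarrow>\<^sub>M count_space UNIV"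
proof -
  have "(\<lambda>f. f x) \<in> PB \<rightarrow>\<^sub>M measure_pmf (\<pi> x)"
    by (rule measurable_component_singleton) simp
  then show ?thesis by simp
qed

lemma comp_PA: "(\<lambda>n. n xa) \<in> PA \<rightarrow>\<^sub>M count_space UNIV"
proof -
  have "(\<lambda>f. f xa) \<in> PA \<rightarrow>\<^sub>M measure_pmf (p (fst xa) (snd xa))"
    by (rule measurable_component_singleton) simp
  then show ?thesis by simp
qed

lemma meas_step:
  fixes F :: "'x \<Rightarrow> 'a \<Rightarrow> real \<Rightarrow> real"
  assumes Fm: "\<And>x' a'. F x' a' \<in> borel_measurable borel"
  shows "(\<lambda>st. F (fst st s) (fst (snd st) (fst st s)) (snd (snd st) s)) \<in> borel_measurable M"
proof -
  have mC: "(\<lambda>c. F x' a' (c s)) \<in> borel_measurable PC" for x' a'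
    using measurable_compose[OF comp_PC Fm] .
  have mBC: "(\<lambda>bc. F x' (fst bc x') (snd bc s)) \<in> borel_measurable (PB \<Otimes>\<^sub>M PC)" for x'
  proof (rule measurable_compose_countable'[where f="\<lambda>i bc. F x' i (snd bc s)" and g="\<lambda>bc. fst bc x'"])
    show "(\<lambda>bc. fst bc x') \<in> PB \<Otimes>\<^sub>M PC \<rightarrow>\<^sub>M count_space UNIV"
      by (rule measurable_compose[OF measurable_fst comp_PB])
    fix i show "(\<lambda>bc. F x' i (snd bc s)) \<in> borel_measurable (PB \<Otimes>\<^sub>M PC)"
      by (rule measurable_compose[OF measurable_snd mC])
  qed simp
  have "(\<lambda>st. F (fst st s) (fst (snd st) (fst st s)) (snd (snd st) s)) \<in> borel_measurable (PA \<Otimes>\<^sub>M (PB \<Otimes>\<^sub>M PC))"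
  proof (rule measurable_compose_countable'[where f="\<lambda>i st. F i (fst (snd st) i) (snd (snd st) s)" and g="\<lambda>st. fst st s"])
    show "(\<lambda>st. fst st s) \<in> PA \<Otimes>\<^sub>M (PB \<Otimes>\<^sub>M PC) \<rightarrow>\<^sub>M count_space UNIV"
      by (rule measurable_compose[OF measurable_fst comp_PA])
    fix i show "(\<lambda>st. F i (fst (snd st) i) (snd (snd st) s)) \<in> borel_measurable (PA \<Otimes>\<^sub>M (PB \<Otimes>\<^sub>M PC))"
      by (rule measurable_compose[OF measurable_snd mBC])
  qed simp
  then show ?thesis unfolding M_eq .
qed

lemma step_integral:
  fixes F :: "'x \<Rightarrow> 'a \<Rightarrow> real \<Rightarrow> real"
  assumes Fm: "\<And>x' a'. F x' a' \<in> borel_measurable borel" and Fb: "\<And>x' a' r. \<bar>F x' a' r\<bar> \<le> B"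
  shows "(\<integral>st. F (fst st (x, a)) (fst (snd st) (fst st (x, a))) (snd (snd st) (x, a)) \<partial>M)
    = (\<Sum>x'\<in>UNIV. \<Sum>a'\<in>UNIV. pmf (p x a) x' * pmf (\<pi> x') a' * (\<integral>r. F x' a' r \<partial>R x a))"
proof -
  let ?s = "(x, a)"
  interpret BC: pair_sigma_finite PB PC
    using PB_prob PC_prob by (intro pair_sigma_finite.intro) (auto simp: prob_space_imp_sigma_finite)
  interpret ABC: pair_sigma_finite PA "PB \<Otimes>\<^sub>M PC"
    using PA_prob PB_prob PC_prob
    by (intro pair_sigma_finite.intro) (auto simp: prob_space_imp_sigma_finite prob_space_pair)
  interpret PBC: prob_space "PB \<Otimes>\<^sub>M PC" using PB_prob PC_prob by (rule prob_space_pair)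
  interpret PCp: prob_space PC by (rule PC_prob)
  have mC: "(\<lambda>c. F x' a' (c ?s)) \<in> borel_measurable PC" for x' a'
    using measurable_compose[OF comp_PC Fm] .
  have mBC: "(\<lambda>bc. F x' (fst bc x') (snd bc ?s)) \<in> borel_measurable (PB \<Otimes>\<^sub>M PC)" for x'
  proof (rule measurable_compose_countable'[where f="\<lambda>i bc. F x' i (snd bc ?s)" and g="\<lambda>bc. fst bc x'"])
    show "(\<lambda>bc. fst bc x') \<in> PB \<Otimes>\<^sub>M PC \<rightarrow>\<^sub>M count_space UNIV"
      by (rule measurable_compose[OF measurable_fst comp_PB])
    fix i show "(\<lambda>bc. F x' i (snd bc ?s)) \<in> borel_measurable (PB \<Otimes>\<^sub>M PC)"
      by (rule measurable_compose[OF measurable_snd mC])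
  qed simp
  have mABC: "(\<lambda>st. F (fst st ?s) (fst (snd st) (fst st ?s)) (snd (snd st) ?s)) \<in> borel_measurable (PA \<Otimes>\<^sub>M (PB \<Otimes>\<^sub>M PC))"
  proof (rule measurable_compose_countable'[where f="\<lambda>i st. F i (fst (snd st) i) (snd (snd st) ?s)" and g="\<lambda>st. fst st ?s"])
    show "(\<lambda>st. fst st ?s) \<in> PA \<Otimes>\<^sub>M (PB \<Otimes>\<^sub>M PC) \<rightarrow>\<^sub>M count_space UNIV"
      by (rule measurable_compose[OF measurable_fst comp_PA])
    fix i show "(\<lambda>st. F i (fst (snd st) i) (snd (snd st) ?s)) \<in> borel_measurable (PA \<Otimes>\<^sub>M (PB \<Otimes>\<^sub>M PC))"
      by (rule measurable_compose[OF measurable_snd mBC])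
  qed simp
  have "(\<integral>st. F (fst st ?s) (fst (snd st) (fst st ?s)) (snd (snd st) ?s) \<partial>M)
      = (\<integral>n. (\<integral>bc. F (n ?s) (fst bc (n ?s)) (snd bc ?s) \<partial>(PB \<Otimes>\<^sub>M PC)) \<partial>PA)"
  proof -
    have int: "integrable (PA \<Otimes>\<^sub>M (PB \<Otimes>\<^sub>M PC)) (\<lambda>st. F (fst st ?s) (fst (snd st) (fst st ?s)) (snd (snd st) ?s))"
      using Mp.integrable_bounded_real[OF _ Fb, of "\<lambda>st. fst st ?s" "\<lambda>st. fst (snd st) (fst st ?s)" "\<lambda>st. snd (snd st) ?s"] mABC
      unfolding M_eq by blast
    show ?thesis using ABC.integral_fst'[OF int] by (simp add: M_eq)
  qed
  also have "\<dots> = (\<integral>n. (\<integral>b. (\<integral>c. F (n ?s) (b (n ?s)) (c ?s) \<partial>PC) \<partial>PB) \<partial>PA)"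
  proof (intro Bochner_Integration.integral_cong refl)
    fix n
    show "(\<integral>bc. F (n ?s) (fst bc (n ?s)) (snd bc ?s) \<partial>(PB \<Otimes>\<^sub>M PC)) = (\<integral>b. (\<integral>c. F (n ?s) (b (n ?s)) (c ?s) \<partial>PC) \<partial>PB)"
    proof -
      have int: "integrable (PB \<Otimes>\<^sub>M PC) (\<lambda>bc. F (n ?s) (fst bc (n ?s)) (snd bc ?s))"
        by (rule PBC.integrable_bounded_real[OF mBC Fb])
      show ?thesis using BC.integral_fst'[OF int] by simp
    qed
  qed
  also have "\<dots> = (\<integral>n. (\<integral>b. (\<integral>r. F (n ?s) (b (n ?s)) r \<partial>R x a) \<partial>PB) \<partial>PA)"
  proof (intro Bochner_Integration.integral_cong refl)
    fix n b
    have "distr PC (R x a) (\<lambda>c. c ?s) = R x a"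
      using distr_PiM_component[where M="\<lambda>xa. R (fst xa) (snd xa)" and I=UNIV and i="?s"] Rp by simp
    moreover have "(\<lambda>c. c ?s) \<in> PC \<rightarrow>\<^sub>M R x a"
      using comp_PC[of ?s] by (simp add: measurable_cong_sets[OF refl Rsets])
    moreover have "F (n ?s) (b (n ?s)) \<in> borel_measurable (R x a)"
      using Fm by (simp add: measurable_cong_sets[OF Rsets refl])
    ultimately show "(\<integral>c. F (n ?s) (b (n ?s)) (c ?s) \<partial>PC) = (\<integral>r. F (n ?s) (b (n ?s)) r \<partial>R x a)"
      using integral_distr[of "\<lambda>c. c ?s" PC "R x a" "F (n ?s) (b (n ?s))"] by simp
  qed
  also have "\<dots> = (\<integral>n. (\<Sum>a'\<in>UNIV. pmf (\<pi> (n ?s)) a' * (\<integral>r. F (n ?s) a' r \<partial>R x a)) \<partial>PA)"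
  proof (intro Bochner_Integration.integral_cong refl)
    fix n :: "'x \<times> 'a \<Rightarrow> 'x"
    let ?x' = "n ?s"
    have d: "distr PB (measure_pmf (\<pi> ?x')) (\<lambda>b. b ?x') = measure_pmf (\<pi> ?x')"
      by (rule distr_PiM_component) (auto simp: measure_pmf.prob_space_axioms)
    have "(\<integral>b. (\<integral>r. F ?x' (b ?x') r \<partial>R x a) \<partial>PB) = (\<integral>a'. (\<integral>r. F ?x' a' r \<partial>R x a) \<partial>measure_pmf (\<pi> ?x'))"
      using integral_distr[of "\<lambda>b. b ?x'" PB "measure_pmf (\<pi> ?x')" "\<lambda>a'. (\<integral>r. F ?x' a' r \<partial>R x a)"] comp_PB[of ?x']
      unfolding d by simp
    also have "\<dots> = (\<Sum>a'\<in>UNIV. pmf (\<pi> ?x') a' * (\<integral>r. F ?x' a' r \<partial>R x a))"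
      by (subst integral_measure_pmf_real[where A=UNIV]) (auto simp: mult.commute)
    finally show "(\<integral>b. (\<integral>r. F ?x' (b ?x') r \<partial>R x a) \<partial>PB) = (\<Sum>a'\<in>UNIV. pmf (\<pi> ?x') a' * (\<integral>r. F ?x' a' r \<partial>R x a))" .
  qed
  also have "\<dots> = (\<Sum>x'\<in>UNIV. \<Sum>a'\<in>UNIV. pmf (p x a) x' * pmf (\<pi> x') a' * (\<integral>r. F x' a' r \<partial>R x a))"
  proof -
    let ?J = "\<lambda>x'. (\<Sum>a'\<in>UNIV. pmf (\<pi> x') a' * (\<integral>r. F x' a' r \<partial>R x a))"
    have d: "distr PA (measure_pmf (p x a)) (\<lambda>n. n ?s) = measure_pmf (p x a)"
      using distr_PiM_component[where M="\<lambda>xa. measure_pmf (p (fst xa) (snd xa))" and I=UNIV and i="?s"]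
      by (simp add: measure_pmf.prob_space_axioms)
    have "(\<integral>n. ?J (n ?s) \<partial>PA) = (\<integral>x'. ?J x' \<partial>measure_pmf (p x a))"
      using integral_distr[of "\<lambda>n. n ?s" PA "measure_pmf (p x a)" ?J] comp_PA[of ?s]
      unfolding d by simp
    also have "\<dots> = (\<Sum>x'\<in>UNIV. ?J x' * pmf (p x a) x')"
      by (subst integral_measure_pmf_real[where A=UNIV]) auto
    finally show ?thesis by (simp add: sum_distrib_left mult_ac)
  qed
  finally show ?thesis .
qed

lemma AE_stream_Bnd: "AE \<omega> in S. stream_all Bnd \<omega>"
  by (rule Mp.AE_stream_all[OF Bnd_pred AE_Bnd])

lemma eta_pi_prob:
  shows "prob_space (eta_pi p \<pi> R g x a)" "sets (eta_pi p \<pi> R g x a) = sets borel"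
  unfolding eta_pi_def
  by (auto intro!: prob_space.prob_space_distr[OF S_prob] meas_disc)

lemma eta_pi_range:
  assumes "0 \<le> g" "g < 1"
  shows "AE w in eta_pi p \<pi> R g x a. \<bar>w\<bar> \<le> Rmax / (1 - g)"
proof -
  have "AE \<omega> in S. \<bar>disc_return g (x, a) \<omega>\<bar> \<le> Rmax / (1 - g)"
    using AE_stream_Bnd by eventually_elim (rule disc_bound[OF _ assms])
  then show ?thesis unfolding eta_pi_def
    by (subst AE_distr_iff) (auto intro!: meas_disc)
qed

lemma eta_pi_integral:
  fixes \<phi> :: "real \<Rightarrow> real"
  assumes \<phi>m[measurable]: "\<phi> \<in> borel_measurable borel" and \<phi>b: "\<And>w. \<bar>\<phi> w\<bar> \<le> B"
    and g: "0 \<le> g" "g < 1"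
  shows "(\<integral>w. \<phi> w \<partial>eta_pi p \<pi> R g x a)
    = (\<Sum>x'\<in>UNIV. \<Sum>a'\<in>UNIV. pmf (p x a) x' * pmf (\<pi> x') a' * (\<integral>r. (\<integral>w. \<phi> (r + g * w) \<partial>eta_pi p \<pi> R g x' a') \<partial>R x a))"
proof -
  let ?s = "(x, a)"
  interpret Sp: prob_space S by (rule S_prob)
  note meas_disc[measurable]
  define F where "F x' a' r = (\<integral>w. \<phi> (r + g * w) \<partial>eta_pi p \<pi> R g x' a')" for x' a' r
  have Fm: "F x' a' \<in> borel_measurable borel" for x' a'
    unfolding F_def[abs_def] by (rule meas_param_int[OF eta_pi_prob(1) eta_pi_prob(2) _ \<phi>m]) simp
  have Fb: "\<bar>F x' a' r\<bar> \<le> B" for x' a' r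
    unfolding F_def by (rule abs_integral_bound[OF eta_pi_prob(1)]) (auto simp: \<phi>b measurable_cong_sets[OF eta_pi_prob(2) refl])
  have "(\<integral>w. \<phi> w \<partial>eta_pi p \<pi> R g x a) = (\<integral>\<omega>. \<phi> (disc_return g ?s \<omega>) \<partial>S)"
    unfolding eta_pi_def by (rule integral_distr) auto
  also have "\<dots> = (\<integral>st. (\<integral>\<omega>. \<phi> (disc_return g ?s (st ## \<omega>)) \<partial>S) \<partial>M)"
    by (rule Mp.integral_stream_space[where B=B]) (auto simp: \<phi>b)
  also have "\<dots> = (\<integral>st. F (fst st ?s) (fst (snd st) (fst st ?s)) (snd (snd st) ?s) \<partial>M)"
  proof (rule integral_cong_AE)
    show "(\<lambda>st. \<integral>\<omega>. \<phi> (disc_return g ?s (st ## \<omega>)) \<partial>S) \<in> borel_measurable M"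
      by measurable
    show "(\<lambda>st. F (fst st ?s) (fst (snd st) (fst st ?s)) (snd (snd st) ?s)) \<in> borel_measurable M"
      by (rule meas_step[OF Fm])
    show "AE st in M. (\<integral>\<omega>. \<phi> (disc_return g ?s (st ## \<omega>)) \<partial>S) = F (fst st ?s) (fst (snd st) (fst st ?s)) (snd (snd st) ?s)"
      using AE_Bnd AE_space
    proof eventually_elim
      case (elim st)
      note stsp = \<open>st \<in> space M\<close>
      let ?s1 = "(fst st ?s, fst (snd st) (fst st ?s))"
      have "(\<integral>\<omega>. \<phi> (disc_return g ?s (st ## \<omega>)) \<partial>S) = (\<integral>\<omega>. \<phi> (snd (snd st) ?s + g * disc_return g ?s1 \<omega>) \<partial>S)"
      proof (rule integral_cong_AE)
        show "AE \<omega> in S. \<phi> (disc_return g ?s (st ## \<omega>)) = \<phi> (snd (snd st) ?s + g * disc_return g ?s1 \<omega>)"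
          using AE_stream_Bnd
        proof eventually_elim
          case (elim \<omega>)
          have "stream_all Bnd (st ## \<omega>)"
            using elim \<open>Bnd st\<close> unfolding stream_all_def by (auto simp: Stream_snth split: nat.split)
          from disc_shift[OF this g] show ?case by (simp add: Let_def)
        qed
        show "(\<lambda>\<omega>. \<phi> (disc_return g ?s (st ## \<omega>))) \<in> borel_measurable S"
          using stsp by measurable
        show "(\<lambda>\<omega>. \<phi> (snd (snd st) ?s + g * disc_return g ?s1 \<omega>)) \<in> borel_measurable S"
          by measurable
      qed
      also have "\<dots> = F (fst st ?s) (fst (snd st) (fst st ?s)) (snd (snd st) ?s)"
        unfolding F_def eta_pi_def by (subst integral_distr) auto
      finally show ?case .
    qed
  qed
  also have "\<dots> = (\<Sum>x'\<in>UNIV. \<Sum>a'\<in>UNIV. pmf (p x a) x' * pmf (\<pi> x') a' * (\<integral>r. F x' a' r \<partial>R x a))"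
    by (rule step_integral[OF Fm Fb])
  finally show ?thesis unfolding F_def .
qed

end



lemma integrable_clip_Y:
  fixes Y :: "real \<Rightarrow> real"
  assumes "prob_space M" "sets M = sets borel" "Y \<in> borel_measurable borel"
  shows "integrable M (\<lambda>w. clip (real k - Y w))"
proof -
  note assms(2)[measurable_cong] assms(3)[measurable]
  show ?thesis by (rule prob_space.integrable_bounded_real[OF assms(1), where B=1]) (auto simp: clip_def)
qed

lemma pmf_double_sum:
  fixes P :: "'x::finite pmf" and Q :: "'x \<Rightarrow> 'a::finite pmf"
  shows "(\<Sum>x'\<in>UNIV. \<Sum>a'\<in>UNIV. pmf P x' * pmf (Q x') a' * c) = c"
proof -
  have "(\<Sum>x'\<in>UNIV. \<Sum>a'\<in>UNIV. pmf P x' * pmf (Q x') a' * c) = (\<Sum>x'\<in>UNIV. pmf P x' * c * (\<Sum>a'\<in>UNIV. pmf (Q x') a'))"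
    by (simp add: sum_distrib_left mult_ac)
  also have "\<dots> = (\<Sum>x'\<in>UNIV. pmf P x') * c"
    by (simp add: sum_pmf_eq_1 sum_distrib_right[symmetric])
  also have "\<dots> = c" by (simp add: sum_pmf_eq_1)
  finally show ?thesis .
qed

theorem theorem2:
  fixes \<gamma> Rmax :: real and K :: nat
    and p :: "'x::finite \<Rightarrow> 'a::finite \<Rightarrow> 'x pmf"
    and \<pi> :: "'x \<Rightarrow> 'a pmf"
    and R :: "'x \<Rightarrow> 'a \<Rightarrow> real measure"
    and \<eta> :: "'x \<Rightarrow> 'a \<Rightarrow> real measure"
  assumes "0 \<le> \<gamma>" and "\<gamma> < 1" and "0 < Rmax" and "2 \<le> K"
    and "\<And>x a. prob_space (R x a)"
    and "\<And>x a. sets (R x a) = sets borel"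
    and "\<And>x a. emeasure (R x a) {- Rmax..Rmax} = 1"
    and "\<And>x a. prob_space (\<eta> x a)"
    and "\<And>x a. sets (\<eta> x a) = sets borel"
    and "\<And>x a. emeasure (\<eta> x a) (zgrid \<gamma> Rmax K ` {1..K}) = 1"
    and "\<And>x a. \<eta> x a = cramer_proj (zgrid \<gamma> Rmax K) K (bellman_op p \<pi> R \<gamma> \<eta> x a)"
  shows "(SUP xa \<in> (UNIV :: ('x \<times> 'a) set).
            (1 / (real K - 1)) *
            (\<Sum>k = 1..K - 1. \<bar>s_stat (zgrid \<gamma> Rmax K) k (eta_pi p \<pi> R \<gamma> (fst xa) (snd xa))
                               - s_stat (zgrid \<gamma> Rmax K) k (\<eta> (fst xa) (snd xa))\<bar>))
         \<le> \<gamma> / (2 * (1 - \<gamma>) * (real K - 1))"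
proof -
  note g0 = assms(1) and g1 = assms(2) and K2 = assms(4)
  note R = assms(5,6) and Rs = assms(7) and E = assms(8,9) and Es = assms(10) and fxp = assms(11)
  interpret grid \<gamma> Rmax K by (intro grid.intro assms(1-4))
  interpret mdp p \<pi> R Rmax by (intro mdp.intro assms(5-7))
  define n where "n = K - 1"
  have n1: "1 \<le> n" and rn: "real n = real K - 1" using K2 unfolding n_def by auto
  define Ep where "Ep x a = eta_pi p \<pi> R \<gamma> x a" for x a
  have Epp: "prob_space (Ep x a)" "sets (Ep x a) = sets borel" for x a
    unfolding Ep_def by (rule eta_pi_prob)+
  define dd where "dd k s = s_stat z k (Ep (fst s) (snd s)) - s_stat z k (\<eta> (fst s) (snd s))" for k s
  define Ds where "Ds s = (\<Sum>k=1..n. \<bar>dd k s\<bar>)" for s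
  define Dm where "Dm = Max (range Ds)"
  have Dle: "Ds s \<le> Dm" for s unfolding Dm_def by (rule Max_ge) auto
  have Ep_range: "AE w in Ep x a. 0 \<le> Y w \<and> Y w \<le> real n" for x a
  proof -
    have "AE w in Ep x a. \<bar>w\<bar> \<le> Rmax / (1 - \<gamma>)" unfolding Ep_def by (rule eta_pi_range[OF g0 g1])
    then show ?thesis
    proof eventually_elim
      case (elim w)
      then have "z1 \<le> w" "w \<le> z K" unfolding zK z1_def by auto
      then show ?case using Y_le_iff[of z1 w] Y_le_iff[of w "z K"] Y_z[of K] Y_z[of 1] z1_eq rn by auto
    qed
  qed
  have E_grid: "AE w in \<eta> x a. \<exists>m\<le>n. Y w = real m" for x a
  proof -
    have fin: "z ` {1..K} \<in> sets (\<eta> x a)" unfolding E(2)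
      by (intro borel_closed finite_imp_closed) auto
    have "AE w in \<eta> x a. w \<in> z ` {1..K}"
      by (rule prob_AE_of_emeasure[OF E(1) fin Es])
    then show ?thesis
    proof eventually_elim
      case (elim w)
      then obtain j where j: "j \<in> {1..K}" "w = z j" by auto
      then show ?case using Y_z[of j] unfolding n_def by (intro exI[of _ "j - 1"]) auto
    qed
  qed
  have key: "Ds s \<le> \<gamma> / 2 + \<gamma> * Dm" for s
  proof -
    obtain x a where s: "s = (x, a)" by (cases s)
    define e where "e k = sgn (dd k s)" for k
    have e1: "\<bar>e k\<bar> \<le> 1" for k unfolding e_def by (simp add: abs_sgn_eq)
    define \<phi> where "\<phi> w = (\<Sum>k=1..n. e k * clip (real k - Y w))" for w
    have \<phi>m[measurable]: "\<phi> \<in> borel_measurable borel" unfolding \<phi>_def by measurable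
    have \<phi>b: "\<bar>\<phi> w\<bar> \<le> real n" for w unfolding \<phi>_def by (rule phi_bound[OF e1])
    have intphi: "(\<integral>w. \<phi> w \<partial>Mm) = (\<Sum>k=1..n. e k * s_stat z k Mm)"
      if "prob_space Mm" "sets Mm = sets borel" for Mm
      unfolding \<phi>_def s_stat_clip
      by (subst Bochner_Integration.integral_sum)
         (auto intro!: integrable_mult_right integrable_clip_Y[OF that] Y_measurable)
    have "Ds s = (\<Sum>k=1..n. e k * dd k s)"
      unfolding Ds_def e_def by (intro sum.cong refl) (simp add: abs_sgn mult.commute)
    also have "\<dots> = (\<integral>w. \<phi> w \<partial>Ep x a) - (\<integral>w. \<phi> w \<partial>\<eta> x a)"
      unfolding intphi[OF Epp] intphi[OF E] dd_def s
      by (simp add: right_diff_distrib sum_subtractf)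
    finally have Ds_eq: "Ds s = (\<integral>w. \<phi> w \<partial>Ep x a) - (\<integral>w. \<phi> w \<partial>\<eta> x a)" .
    define A where "A E x' a' r = (\<integral>w. \<phi> (r + \<gamma> * w) \<partial>E x' a')"
      for E :: "'x \<Rightarrow> 'a \<Rightarrow> real measure" and x' a' r
    have Api: "(\<integral>w. \<phi> w \<partial>Ep x a) = (\<Sum>x'\<in>UNIV. \<Sum>a'\<in>UNIV. pmf (p x a) x' * pmf (\<pi> x') a' * (\<integral>r. A Ep x' a' r \<partial>R x a))"
      unfolding A_def Ep_def by (rule eta_pi_integral[OF \<phi>m \<phi>b g0 g1])
    have Aeta: "(\<integral>w. \<phi> w \<partial>\<eta> x a) = (\<Sum>x'\<in>UNIV. \<Sum>a'\<in>UNIV. pmf (p x a) x' * pmf (\<pi> x') a' * (\<integral>r. A \<eta> x' a' r \<partial>R x a))"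
      unfolding A_def \<phi>_def by (rule eta_side[OF R Rs E Es fxp e1])
    have Am: "(A E x' a') \<in> borel_measurable (R x a)" if "\<And>x a. prob_space (E x a)" "\<And>x a. sets (E x a) = sets borel" for E x' a'
      unfolding A_def[abs_def] by (rule meas_param_int[OF that R(2) \<phi>m])
    have Ab: "\<bar>A E x' a' r\<bar> \<le> real n" if "\<And>x a. prob_space (E x a)" "\<And>x a. sets (E x a) = sets borel" for E x' a' r
      unfolding A_def by (rule abs_integral_bound[OF that(1)]) (auto simp: \<phi>b measurable_cong_sets[OF that(2) refl])
    interpret Rp: prob_space "R x a" by (rule R(1))
    have intA: "integrable (R x a) (A E x' a')" if "\<And>x a. prob_space (E x a)" "\<And>x a. sets (E x a) = sets borel" for E x' a'
      by (rule Rp.integrable_bounded_real[OF Am[OF that] Ab[OF that]])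
    have inner: "A Ep x' a' r - A \<eta> x' a' r \<le> \<gamma> / 2 + \<gamma> * Ds (x', a')" for x' a' r
    proof -
      define b where "b = (r + \<gamma> * z1 - z1) / D"
      have "A Ep x' a' r - A \<eta> x' a' r
        = (\<integral>w. (\<Sum>k=1..n. e k * clip (real k - (\<gamma> * Y w + b))) \<partial>Ep x' a')
        - (\<integral>w. (\<Sum>k=1..n. e k * clip (real k - (\<gamma> * Y w + b))) \<partial>\<eta> x' a')"
        unfolding A_def \<phi>_def Y_aff b_def ..
      also have "\<dots> \<le> \<gamma> / 2 + \<gamma> * (\<Sum>k=1..n. \<bar>(\<integral>w. clip (real k - Y w) \<partial>Ep x' a') - (\<integral>w. clip (real k - Y w) \<partial>\<eta> x' a')\<bar>)"
        by (rule partB[OF Epp(1) E(1) Epp(2) E(2) Y_measurable Ep_range E_grid e1 g0 n1])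
      also have "\<dots> = \<gamma> / 2 + \<gamma> * Ds (x', a')"
        unfolding Ds_def dd_def s_stat_clip by simp
      finally show ?thesis .
    qed
    have "Ds s = (\<Sum>x'\<in>UNIV. \<Sum>a'\<in>UNIV. pmf (p x a) x' * pmf (\<pi> x') a' * ((\<integral>r. A Ep x' a' r \<partial>R x a) - (\<integral>r. A \<eta> x' a' r \<partial>R x a)))"
      unfolding Ds_eq Api Aeta by (simp add: right_diff_distrib sum_subtractf)
    also have "\<dots> \<le> (\<Sum>x'\<in>UNIV. \<Sum>a'\<in>UNIV. pmf (p x a) x' * pmf (\<pi> x') a' * (\<gamma> / 2 + \<gamma> * Dm))"
    proof (intro sum_mono mult_left_mono)
      fix x' a'
      have "(\<integral>r. A Ep x' a' r \<partial>R x a) - (\<integral>r. A \<eta> x' a' r \<partial>R x a) = (\<integral>r. A Ep x' a' r - A \<eta> x' a' r \<partial>R x a)"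
        by (rule Bochner_Integration.integral_diff[symmetric, OF intA[OF Epp] intA[OF E]])
      also have "\<dots> \<le> (\<integral>r. \<gamma> / 2 + \<gamma> * Dm \<partial>R x a)"
      proof (rule integral_mono)
        show "integrable (R x a) (\<lambda>r. A Ep x' a' r - A \<eta> x' a' r)"
          by (rule Bochner_Integration.integrable_diff[OF intA[OF Epp] intA[OF E]])
        fix r
        have "\<gamma> * Ds (x', a') \<le> \<gamma> * Dm" by (rule mult_left_mono[OF Dle g0])
        then show "A Ep x' a' r - A \<eta> x' a' r \<le> \<gamma> / 2 + \<gamma> * Dm" using inner[of x' a' r] by linarith
      qed simp
      also have "\<dots> = \<gamma> / 2 + \<gamma> * Dm" by (simp add: Rp.prob_space)
      finally show "(\<integral>r. A Ep x' a' r \<partial>R x a) - (\<integral>r. A \<eta> x' a' r \<partial>R x a) \<le> \<gamma> / 2 + \<gamma> * Dm" .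
    qed simp
    also have "\<dots> = \<gamma> / 2 + \<gamma> * Dm" by (rule pmf_double_sum)
    finally show ?thesis .
  qed
  have Dm_bound: "Dm \<le> \<gamma> / (2 * (1 - \<gamma>))"
  proof -
    have "Dm \<in> range Ds" unfolding Dm_def by (rule Max_in) auto
    then obtain s where "Dm = Ds s" by auto
    with key[of s] have "Dm * (1 - \<gamma>) \<le> \<gamma> / 2" by (simp add: algebra_simps)
    then show ?thesis using g1 by (simp add: field_simps)
  qed
  show ?thesis
  proof (rule cSUP_least)
    fix xa :: "'x \<times> 'a"
    have "(\<Sum>k = 1..K - 1. \<bar>s_stat (zgrid \<gamma> Rmax K) k (eta_pi p \<pi> R \<gamma> (fst xa) (snd xa))
                               - s_stat (zgrid \<gamma> Rmax K) k (\<eta> (fst xa) (snd xa))\<bar>) = Ds xa"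
      unfolding Ds_def dd_def Ep_def n_def ..
    also have "\<dots> \<le> \<gamma> / (2 * (1 - \<gamma>))" using Dle[of xa] Dm_bound by linarith
    finally have *: "(\<Sum>k = 1..K - 1. \<bar>s_stat (zgrid \<gamma> Rmax K) k (eta_pi p \<pi> R \<gamma> (fst xa) (snd xa))
                               - s_stat (zgrid \<gamma> Rmax K) k (\<eta> (fst xa) (snd xa))\<bar>) \<le> \<gamma> / (2 * (1 - \<gamma>))" .
    have pos: "0 < real K - 1" using K2 by simp
    show "(1 / (real K - 1)) * (\<Sum>k = 1..K - 1. \<bar>s_stat (zgrid \<gamma> Rmax K) k (eta_pi p \<pi> R \<gamma> (fst xa) (snd xa))
                               - s_stat (zgrid \<gamma> Rmax K) k (\<eta> (fst xa) (snd xa))\<bar>)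
         \<le> \<gamma> / (2 * (1 - \<gamma>) * (real K - 1))"
      using mult_left_mono[OF * less_imp_le[OF positive_imp_inverse_positive[OF pos]]] pos
      by (simp add: field_simps)
  qed simp
qed

end
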